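(* Let $\mathcal{N}_{A\to B}$ be a quantum channel between finite-dimensional systems, let $\varepsilon\in[0,1]$ and let $k\ge1$ be an integer. Then $$C^{\varepsilon}(\mathcal{N}_{A\to B})\le -\log_2\inf\lambda,$$ where the infimum is over $\lambda\ge0$, quantum states $\rho_A$, and operators $\{Q^{y_1^k}_{AB_1^k}\}_{y_1^k\in\{0,1\}^k}$ on $A B_1\cdots B_k$ (each $B_i\cong B$) subject to: (1) $\sum_{y_1^k\in\{0,1\}^k}Q^{y_1^k}_{AB_1^k}=\rho_A\otimes I_{B_1^k}$; (2) $Q^{y_1^k}_{AB_1^k}\ge0$ for all $y_1^k$; (3) $W^\pi_{B_1^k}Q^{(y_{\pi(1)},\dots,y_{\pi(k)})}_{AB_1^k}(W^\pi_{B_1^k})^\dagger=Q^{y_1^k}_{AB_1^k}$ for all $\pi\in S_k$ and all $y_1^k$; (4) $T_{B_1^i}(Q^{y_1^k}_{AB_1^k})\ge0$ for all $i\in[k]$ and all $y_1^k$; (5) $\sum_{y_2^k}\operatorname{Tr}_A[Q^{(0,y_2,\dots,y_k)}_{AB_1^k}]\le\lambda I_{B_1^k}$; (6) $\sum_{y_k}\operatorname{Tr}_A[Q^{y_1^k}_{AB_1^k}]=\frac{1}{|B|}\sum_{y_k}\operatorname{Tr}_{AB_k}[Q^{y_1^k}_{AB_1^k}]\otimes I_{B_k}$ for all $y_1^{k-1}\in\{0,1\}^{k-1}$; (7) $\frac{1}{|B|^{k-1}}\sum_{y_2^k}\operatorname{Tr}\big[Q^{(0,y_2,\dots,y_k)}_{AB_1^k}(\Gamma^{\mathcal{N}}_{AB_1}\otimes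 I_{B_2^k})\big]\ge1-\varepsilon$.
   Context: Notation: $y_i^j=(y_i,\dots,y_j)$, $B_i^j=B_i\cdots B_j$; $W^\pi_{B_1^k}$ is the unitary permuting systems $B_1,\dots,B_k$ according to $\pi\in S_k$; $T_{B_1^i}$ denotes the partial transpose (in the standard basis) on systems $B_1,\dots,B_i$. The Choi operator is $\Gamma^{\mathcal{N}}_{AB}=\sum_{i,j=0}^{|A|-1}|i\rangle\!\langle j|_A\otimes\mathcal{N}(|i\rangle\!\langle j|)_B$ (with the reference system identified with $A$). One-shot classical capacity: for a finite message set $\mathcal{X}$, an encoding classical-quantum channel $\mathcal{E}_{X\to A}$ (i.e., states $\rho^x_A=\mathcal{E}(|x\rangle\!\langle x|)$) and a decoding POVM $\{\Lambda^{\hat x}_B\}_{\hat x\in\mathcal{X}}$, the maximal error probability is $p_{\rm err}=\max_{x\in\mathcal{X}}\sum_{\hat x\ne x}\operatorname{Tr}[\Lambda^{\hat x}_B\mathcal{N}(\rho^x_A)]$, and $C^\varepsilon(\mathcal{N})=\sup\{\log_2|\mathcal{X}|: p_{\rm err}\le\varepsilon\}$ over all $\mathcal{X},\mathcal{E},\{\Lambda^{\hat x}\}$. *)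

theory Defs
  imports "HOL-Analysis.Analysis" "HOL-Library.Complex_Order" "HOL-Combinatorics.Permutations"
begin

text \<open>An operator on a finite-dimensional system with orthonormal basis indexed by a finite
  set I is a function X :: 'i => 'i => complex (matrix entries X i j = <i|X|j>);
  only the entries on I x I are relevant.  Complex numbers are ordered as in
  HOL-Library.Complex_Order (z >= 0 iff z is real and nonnegative).\<close>

definition delta :: "'i \<Rightarrow> 'i \<Rightarrow> complex" where
  "delta i j = (if i = j then 1 else 0)"

definition trace_on :: "'i set \<Rightarrow> ('i \<Rightarrow> 'i \<Rightarrow> complex) \<Rightarrow> complex" where
  "trace_on I X = (\<Sum>i\<in>I. X i i)"

definition mmult_on :: "'i set \<Rightarrow> ('i \<Rightarrow> 'i \<Rightarrow> complex) \<Rightarrow> ('i \<Rightarrow> 'i \<Rightarrow> complex) \<Rightarrow> ('i \<Rightarrow> 'i \<Rightarrow> complex)" where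
  "mmult_on I X Y = (\<lambda>i j. \<Sum>l\<in>I. X i l * Y l j)"

definition psd_on :: "'i set \<Rightarrow> ('i \<Rightarrow> 'i \<Rightarrow> complex) \<Rightarrow> bool" where
  "psd_on I X \<longleftrightarrow> (\<forall>v :: 'i \<Rightarrow> complex. 0 \<le> (\<Sum>i\<in>I. \<Sum>j\<in>I. cnj (v i) * X i j * v j))"

definition is_state_on :: "'i set \<Rightarrow> ('i \<Rightarrow> 'i \<Rightarrow> complex) \<Rightarrow> bool" where
  "is_state_on I \<rho> \<longleftrightarrow> psd_on I \<rho> \<and> trace_on I \<rho> = 1"

text \<open>A linear map N from operators on A (dimension dA, basis {..<dA}) to operators on B
  (dimension dB, basis {..<dB}) is given by its values on matrix units:
  N i j = N(|i><j|), a dB x dB matrix.\<close>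

type_synonym chan = "nat \<Rightarrow> nat \<Rightarrow> nat \<Rightarrow> nat \<Rightarrow> complex"

definition apply_chan :: "nat \<Rightarrow> chan \<Rightarrow> (nat \<Rightarrow> nat \<Rightarrow> complex) \<Rightarrow> (nat \<Rightarrow> nat \<Rightarrow> complex)" where
  "apply_chan dA N X = (\<lambda>b b'. \<Sum>i<dA. \<Sum>j<dA. X i j * N i j b b')"

definition completely_positive :: "nat \<Rightarrow> nat \<Rightarrow> chan \<Rightarrow> bool" where
  "completely_positive dA dB N \<longleftrightarrow>
     (\<forall>(n::nat) (X :: nat \<times> nat \<Rightarrow> nat \<times> nat \<Rightarrow> complex).
        psd_on ({..<n} \<times> {..<dA}) X \<longrightarrow>
        psd_on ({..<n} \<times> {..<dB})
          (\<lambda>(r, b) (r', b'). \<Sum>i<dA. \<Sum>j<dA. X (r, i) (r', j) * N i j b b'))"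

definition trace_preserving :: "nat \<Rightarrow> nat \<Rightarrow> chan \<Rightarrow> bool" where
  "trace_preserving dA dB N \<longleftrightarrow>
     (\<forall>i<dA. \<forall>j<dA. trace_on {..<dB} (N i j) = delta i j)"

definition quantum_channel :: "nat \<Rightarrow> nat \<Rightarrow> chan \<Rightarrow> bool" where
  "quantum_channel dA dB N \<longleftrightarrow> completely_positive dA dB N \<and> trace_preserving dA dB N"

text \<open>Choi operator Gamma_{AB} = sum_{i,j} |i><j|_A (x) N(|i><j|)_B, basis pairs (a,b).\<close>
definition choi :: "chan \<Rightarrow> (nat \<times> nat \<Rightarrow> nat \<times> nat \<Rightarrow> complex)" where
  "choi N = (\<lambda>(a, b) (a', b'). N a a' b b')"

definition povm_on :: "'i set \<Rightarrow> nat \<Rightarrow> (nat \<Rightarrow> 'i \<Rightarrow> 'i \<Rightarrow> complex) \<Rightarrow> bool" where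
  "povm_on I M Lam \<longleftrightarrow> (\<forall>x<M. psd_on I (Lam x)) \<and>
     (\<forall>i\<in>I. \<forall>j\<in>I. (\<Sum>x<M. Lam x i j) = delta i j)"

definition max_err_prob :: "nat \<Rightarrow> nat \<Rightarrow> chan \<Rightarrow> nat \<Rightarrow> (nat \<Rightarrow> nat \<Rightarrow> nat \<Rightarrow> complex)
    \<Rightarrow> (nat \<Rightarrow> nat \<Rightarrow> nat \<Rightarrow> complex) \<Rightarrow> real" where
  "max_err_prob dA dB N M \<rho> Lam =
     Max ((\<lambda>x. Re (\<Sum>xh\<in>{..<M} - {x}.
              trace_on {..<dB} (mmult_on {..<dB} (Lam xh) (apply_chan dA N (\<rho> x))))) ` {..<M})"

definition achievable :: "nat \<Rightarrow> nat \<Rightarrow> chan \<Rightarrow> real \<Rightarrow> nat \<Rightarrow> bool" where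
  "achievable dA dB N \<epsilon> M \<longleftrightarrow> 1 \<le> M \<and>
     (\<exists>\<rho> Lam. (\<forall>x<M. is_state_on {..<dA} (\<rho> x)) \<and> povm_on {..<dB} M Lam \<and>
              max_err_prob dA dB N M \<rho> Lam \<le> \<epsilon>)"

definition one_shot_capacity :: "nat \<Rightarrow> nat \<Rightarrow> chan \<Rightarrow> real \<Rightarrow> ereal" where
  "one_shot_capacity dA dB N \<epsilon> = (SUP M\<in>{M. achievable dA dB N \<epsilon> M}. ereal (log 2 (real M)))"

text \<open>Basis of B_1...B_n: lists bs of length n with entries < dB (bs ! (i-1) is the B_i index).
  Basis of A B_1...B_k: pairs (a, bs).  Bit strings y_1^k: nat lists with entries in {0,1}.\<close>

definition idxB :: "nat \<Rightarrow> nat \<Rightarrow> nat list set" where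
  "idxB dB n = {bs. length bs = n \<and> (\<forall>b\<in>set bs. b < dB)}"

definition idxAB :: "nat \<Rightarrow> nat \<Rightarrow> nat \<Rightarrow> (nat \<times> nat list) set" where
  "idxAB dA dB n = {..<dA} \<times> idxB dB n"

definition bitstrings :: "nat \<Rightarrow> nat list set" where
  "bitstrings n = {ys. length ys = n \<and> set ys \<subseteq> {0, 1}}"

type_synonym opAB = "nat \<times> nat list \<Rightarrow> nat \<times> nat list \<Rightarrow> complex"

definition permute_list_by :: "(nat \<Rightarrow> nat) \<Rightarrow> 'a list \<Rightarrow> 'a list" where
  "permute_list_by \<pi> xs = map (\<lambda>j. xs ! \<pi> j) [0..<length xs]"

text \<open>W^pi X W^pi^dagger, where W^pi moves system B_i to position pi(i):
  W^pi |b_1...b_k> = |b_{pi^-1(1)} ... b_{pi^-1(k)}>, so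
  <cs|W X W^dagger|cs'> = <cs o pi| X |cs' o pi>.\<close>
definition conj_perm :: "(nat \<Rightarrow> nat) \<Rightarrow> opAB \<Rightarrow> opAB" where
  "conj_perm \<pi> X = (\<lambda>(a, cs) (a', cs'). X (a, permute_list_by \<pi> cs) (a', permute_list_by \<pi> cs'))"

text \<open>Partial transpose on B_1...B_i (standard basis).\<close>
definition ptrans :: "nat \<Rightarrow> opAB \<Rightarrow> opAB" where
  "ptrans i X = (\<lambda>(a, bs) (a', bs'). X (a, take i bs' @ drop i bs) (a', take i bs @ drop i bs'))"

definition ptrace_A :: "nat \<Rightarrow> opAB \<Rightarrow> (nat list \<Rightarrow> nat list \<Rightarrow> complex)" where
  "ptrace_A dA X = (\<lambda>bs bs'. \<Sum>a<dA. X (a, bs) (a, bs'))"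

definition ptrace_ABk_tensor_I :: "nat \<Rightarrow> nat \<Rightarrow> opAB \<Rightarrow> (nat list \<Rightarrow> nat list \<Rightarrow> complex)" where
  "ptrace_ABk_tensor_I dA dB X = (\<lambda>bs bs'.
      (\<Sum>a<dA. \<Sum>c<dB. X (a, butlast bs @ [c]) (a, butlast bs' @ [c])) * delta (last bs) (last bs'))"

definition choi_ext :: "chan \<Rightarrow> opAB" where
  "choi_ext N = (\<lambda>(a, bs) (a', bs'). choi N (a, hd bs) (a', hd bs') * delta (tl bs) (tl bs'))"

definition feasible :: "nat \<Rightarrow> nat \<Rightarrow> chan \<Rightarrow> real \<Rightarrow> nat \<Rightarrow> real
     \<Rightarrow> (nat \<Rightarrow> nat \<Rightarrow> complex) \<Rightarrow> (nat list \<Rightarrow> opAB) \<Rightarrow> bool" where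
  "feasible dA dB N \<epsilon> k lam \<rho> Q \<longleftrightarrow>
     0 \<le> lam \<and> is_state_on {..<dA} \<rho> \<and>
     \<comment> \<open>(1)\<close>
     (\<forall>(a, bs)\<in>idxAB dA dB k. \<forall>(a', bs')\<in>idxAB dA dB k.
        (\<Sum>y\<in>bitstrings k. Q y (a, bs) (a', bs')) = \<rho> a a' * delta bs bs') \<and>
     \<comment> \<open>(2)\<close>
     (\<forall>y\<in>bitstrings k. psd_on (idxAB dA dB k) (Q y)) \<and>
     \<comment> \<open>(3)\<close>
     (\<forall>\<pi>. \<pi> permutes {..<k} \<longrightarrow> (\<forall>y\<in>bitstrings k.
        (\<forall>p\<in>idxAB dA dB k. \<forall>p'\<in>idxAB dA dB k.
           conj_perm \<pi> (Q (permute_list_by \<pi> y)) p p' = Q y p p'))) \<and>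
     \<comment> \<open>(4)\<close>
     (\<forall>i\<in>{1..k}. \<forall>y\<in>bitstrings k. psd_on (idxAB dA dB k) (ptrans i (Q y))) \<and>
     \<comment> \<open>(5)\<close>
     psd_on (idxB dB k) (\<lambda>bs bs'. complex_of_real lam * delta bs bs' -
        (\<Sum>y'\<in>bitstrings (k - 1). ptrace_A dA (Q (0 # y')) bs bs')) \<and>
     \<comment> \<open>(6)\<close>
     (\<forall>y'\<in>bitstrings (k - 1). \<forall>bs\<in>idxB dB k. \<forall>bs'\<in>idxB dB k.
        (\<Sum>yk\<in>{0, 1}. ptrace_A dA (Q (y' @ [yk])) bs bs') =
        (1 / of_nat dB) * (\<Sum>yk\<in>{0, 1}. ptrace_ABk_tensor_I dA dB (Q (y' @ [yk])) bs bs')) \<and>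
     \<comment> \<open>(7)\<close>
     complex_of_real (1 - \<epsilon>) \<le>
       (1 / of_nat dB ^ (k - 1)) * (\<Sum>y'\<in>bitstrings (k - 1).
          trace_on (idxAB dA dB k) (mmult_on (idxAB dA dB k) (Q (0 # y')) (choi_ext N)))"

definition neg_log2 :: "ereal \<Rightarrow> ereal" where
  "neg_log2 L = (if L = 0 then \<infinity> else if L = \<infinity> then -\<infinity>
                 else ereal (- log 2 (real_of_ereal L)))"

definition sdp_bound :: "nat \<Rightarrow> nat \<Rightarrow> chan \<Rightarrow> real \<Rightarrow> nat \<Rightarrow> ereal" where
  "sdp_bound dA dB N \<epsilon> k =
     neg_log2 (INF lam\<in>{lam. \<exists>\<rho> Q. feasible dA dB N \<epsilon> k lam \<rho> Q}. ereal lam)"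

end

theory Submission
  imports Defs
begin


definition qf :: "'i set \<Rightarrow> ('i \<Rightarrow> 'i \<Rightarrow> complex) \<Rightarrow> ('i \<Rightarrow> complex) \<Rightarrow> complex" where
  "qf I X v = (\<Sum>i\<in>I. \<Sum>j\<in>I. cnj (v i) * X i j * v j)"

lemma psd_qf: "psd_on I X \<longleftrightarrow> (\<forall>v. 0 \<le> qf I X v)"
  by (simp add: psd_on_def qf_def)

lemma cge0: "(0::complex) \<le> z \<longleftrightarrow> 0 \<le> Re z \<and> Im z = 0"
  by (auto simp: less_eq_complex_def)

lemma qf_cong: "(\<And>i j. i \<in> I \<Longrightarrow> j \<in> I \<Longrightarrow> X i j = Y i j) \<Longrightarrow> (\<And>i. i \<in> I \<Longrightarrow> v i = u i)
   \<Longrightarrow> qf I X v = qf I Y u"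
  unfolding qf_def by (intro sum.cong refl) auto

lemma psd_cong: "(\<And>i j. i \<in> I \<Longrightarrow> j \<in> I \<Longrightarrow> X i j = Y i j) \<Longrightarrow> psd_on I X = psd_on I Y"
  unfolding psd_qf using qf_cong[of I X Y] by metis

lemma qf_support:
  assumes "finite I" "S \<subseteq> I" "\<And>i. i \<in> I - S \<Longrightarrow> v i = 0"
  shows "qf I X v = qf S X v"
proof -
  have "qf I X v = (\<Sum>i\<in>I. \<Sum>j\<in>S. cnj (v i) * X i j * v j)"
    unfolding qf_def
  proof (rule sum.cong[OF refl])
    fix i assume "i \<in> I"
    show "(\<Sum>j\<in>I. cnj (v i) * X i j * v j) = (\<Sum>j\<in>S. cnj (v i) * X i j * v j)"
      by (rule sum.mono_neutral_right) (use assms in auto)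
  qed
  also have "\<dots> = (\<Sum>i\<in>S. \<Sum>j\<in>S. cnj (v i) * X i j * v j)"
    by (rule sum.mono_neutral_right) (use assms in auto)
  finally show ?thesis unfolding qf_def .
qed

lemma psd_subset: assumes "finite I" "S \<subseteq> I" "psd_on I X" shows "psd_on S X"
  unfolding psd_qf
proof
  fix v
  let ?u = "\<lambda>i. if i \<in> S then v i else (0::complex)"
  have "qf I X ?u = qf S X ?u" by (rule qf_support) (use assms in auto)
  also have "\<dots> = qf S X v" by (rule qf_cong) auto
  finally show "0 \<le> qf S X v" using assms(3) unfolding psd_qf by metis
qed

lemma psd_diag: assumes "finite I" "psd_on I X" "i \<in> I" shows "0 \<le> X i i"
proof -
  let ?v = "\<lambda>l. if l = i then 1 else (0::complex)"
  have "qf I X ?v = qf {i} X ?v" by (rule qf_support) (use assms in auto)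
  also have "\<dots> = X i i" by (simp add: qf_def)
  finally show ?thesis using assms(2) unfolding psd_qf by metis
qed


lemma psd_herm: assumes "finite I" "psd_on I X" "i \<in> I" "j \<in> I" shows "X j i = cnj (X i j)"
proof (cases "i = j")
  case True
  then show ?thesis using psd_diag[OF assms(1,2,3)] by (simp add: complex_eq_iff less_eq_complex_def)
next
  case False
  have di: "Im (X i i) = 0" and dj: "Im (X j j) = 0"
    using psd_diag[OF assms(1,2,3)] psd_diag[OF assms(1,2,4)] by (auto simp: less_eq_complex_def)
  let ?v = "\<lambda>l. if l = i then 1 else if l = j then 1 else (0::complex)"
  have "qf I X ?v = qf {i,j} X ?v" by (rule qf_support) (use assms in auto)
  also have "\<dots> = X i i + X i j + (X j i + X j j)" using False by (simp add: qf_def)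
  finally have "Im (X i i + X i j + (X j i + X j j)) = 0" using assms(2) unfolding psd_qf cge0
    by metis
  hence 1: "Im (X i j) + Im (X j i) = 0" using di dj by simp
  let ?u = "\<lambda>l. if l = i then 1 else if l = j then \<i> else (0::complex)"
  have "qf I X ?u = qf {i,j} X ?u" by (rule qf_support) (use assms in auto)
  also have "\<dots> = X i i + X i j * \<i> + (- \<i> * X j i + X j j)" using False by (simp add: qf_def algebra_simps)
  finally have "Im (X i i + X i j * \<i> + (- \<i> * X j i + X j j)) = 0" using assms(2) unfolding psd_qf cge0
    by metis
  hence 2: "Re (X i j) - Re (X j i) = 0" using di dj by simp
  from 1 2 show ?thesis by (simp add: complex_eq_iff)
qed

lemma psd_offdiag0:
  assumes "finite I" "psd_on I X" "i \<in> I" "j \<in> I" "X i i = 0" shows "X i j = 0"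
proof (rule ccontr)
  assume z: "X i j \<noteq> 0"
  hence ij: "i \<noteq> j" using assms by auto
  let ?z = "X i j"
  define r where "r = (Re (X j j) + 1) / (2 * (cmod ?z)^2)"
  have rpos: "r * (2 * (cmod ?z)^2) = Re (X j j) + 1"
    unfolding r_def using z by simp
  define t where "t = - (of_real r * ?z)"
  let ?v = "\<lambda>l. if l = i then t else if l = j then 1 else (0::complex)"
  have h: "X j i = cnj ?z" by (rule psd_herm) (use assms in auto)
  have "qf I X ?v = qf {i,j} X ?v" by (rule qf_support) (use assms in auto)
  also have "\<dots> = cnj t * X i i * t + cnj t * ?z + (X j i * t + X j j)" using ij by (simp add: qf_def)
  also have "\<dots> = X j j - 2 * of_real r * (cnj ?z * ?z)" using assms(5) h
    unfolding t_def by (simp add: algebra_simps)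
  also have "cnj ?z * ?z = of_real ((cmod ?z)^2)" by (simp add: complex_norm_square mult.commute del: of_real_power)
  finally have "0 \<le> Re (X j j - 2 * of_real r * of_real ((cmod ?z)^2))"
    using assms(2) unfolding psd_qf cge0 by metis
  hence "0 \<le> Re (X j j) - r * (2 * (cmod ?z)^2)" by (simp add: algebra_simps)
  with rpos show False by simp
qed



lemma psd_decomp:
  "finite I \<Longrightarrow> psd_on I X \<Longrightarrow> \<exists>(m::nat) w. \<forall>i\<in>I. \<forall>j\<in>I. X i j = (\<Sum>l<m. w l i * cnj (w l j))"
proof (induction I arbitrary: X rule: finite_induct)
  case empty
  then show ?case by auto
next
  case (insert i0 F)
  have fin: "finite (insert i0 F)" using insert by auto
  have psdF: "psd_on F X" by (rule psd_subset[OF fin _ insert.prems]) auto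
  have herm: "\<And>i j. i \<in> insert i0 F \<Longrightarrow> j \<in> insert i0 F \<Longrightarrow> X j i = cnj (X i j)"
    by (rule psd_herm[OF fin insert.prems])
  define d where "d = X i0 i0"
  have d0: "0 \<le> d" unfolding d_def by (rule psd_diag[OF fin insert.prems]) auto
  show ?case
  proof (cases "d = 0")
    case True
    have row: "\<And>j. j \<in> insert i0 F \<Longrightarrow> X i0 j = 0"
      by (rule psd_offdiag0[OF fin insert.prems]) (use True d_def in auto)
    have col: "\<And>j. j \<in> insert i0 F \<Longrightarrow> X j i0 = 0"
      using row herm by (metis complex_cnj_zero insertI1)
    obtain m :: nat and w :: "nat \<Rightarrow> 'a \<Rightarrow> complex" where mw: "\<forall>i\<in>F. \<forall>j\<in>F. X i j = (\<Sum>l<m. w l i * cnj (w l j))"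
      using insert.IH[OF psdF] by blast
    show ?thesis
    proof (intro exI ballI)
      fix i j assume i: "i \<in> insert i0 F" and j: "j \<in> insert i0 F"
      show "X i j = (\<Sum>l<m. (\<lambda>l i. if i = i0 then 0 else w l i) l i * cnj ((\<lambda>l i. if i = i0 then 0 else w l i) l j))"
      proof (cases "i = i0 \<or> j = i0")
        case True then show ?thesis using i j row col by auto
      next
        case False
        then have "i \<in> F" "j \<in> F" "i \<noteq> i0" "j \<noteq> i0" using i j by auto
        then show ?thesis using mw by simp
      qed
    qed
  next
    case False
    have dre: "d = of_real (Re d)" using d0 unfolding cge0 by (simp add: complex_eq_iff)
    have rd: "0 < Re d"
    proof -
      have "Re d \<noteq> 0" using dre False by (metis of_real_0)
      thus ?thesis using d0 unfolding cge0 by simp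
    qed
    define sd where "sd = sqrt (Re d)"
    have "complex_of_real sd * of_real sd = of_real (Re d)"
      unfolding of_real_mult[symmetric] sd_def using rd by simp
    hence sdsq: "of_real sd * of_real sd = d" using dre by simp
    have sdnz: "sd \<noteq> 0" using rd unfolding sd_def by simp
    define c where "c i = X i i0 / of_real sd" for i
    have cc: "c i * cnj (c j) = X i i0 * X i0 j / d" if "j \<in> insert i0 F" for i j
    proof -
      have "cnj (X j i0) = X i0 j" using herm[of j i0] that by simp
      thus ?thesis unfolding c_def using sdsq by (simp add: field_simps)
    qed
    define Y where "Y i j = X i j - c i * cnj (c j)" for i j
    have psdY: "psd_on F Y"
      unfolding psd_qf
    proof
      fix v :: "'a \<Rightarrow> complex"
      define s where "s = (\<Sum>j\<in>F. X i0 j * v j)"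
      define t where "t = - s / d"
      define v' where "v' l = (if l = i0 then t else v l)" for l
      have vF: "\<And>l. l \<in> F \<Longrightarrow> v' l = v l" unfolding v'_def using insert.hyps by auto
      have A: "qf (insert i0 F) X v' = cnj t * d * t + cnj t * s + (\<Sum>i\<in>F. cnj (v i) * X i i0) * t + qf F X v"
      proof -
        have "qf (insert i0 F) X v' = (\<Sum>j\<in>insert i0 F. cnj t * X i0 j * v' j) + (\<Sum>i\<in>F. \<Sum>j\<in>insert i0 F. cnj (v i) * X i j * v' j)"
          unfolding qf_def using insert.hyps vF by (simp add: v'_def)
        also have "(\<Sum>j\<in>insert i0 F. cnj t * X i0 j * v' j) = cnj t * d * t + cnj t * s"
          using insert.hyps vF by (simp add: s_def d_def sum_distrib_left v'_def mult.assoc)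
        also have "(\<Sum>i\<in>F. \<Sum>j\<in>insert i0 F. cnj (v i) * X i j * v' j) = (\<Sum>i\<in>F. cnj (v i) * X i i0 * t + (\<Sum>j\<in>F. cnj (v i) * X i j * v j))"
          using insert.hyps vF by (intro sum.cong refl) (simp add: v'_def)
        also have "\<dots> = (\<Sum>i\<in>F. cnj (v i) * X i i0) * t + qf F X v"
          by (simp add: qf_def sum.distrib sum_distrib_right)
        finally show ?thesis by simp
      qed
      have B: "(\<Sum>i\<in>F. cnj (v i) * X i i0) = cnj s"
        unfolding s_def cnj_sum
      proof (rule sum.cong[OF refl])
        fix i assume "i \<in> F"
        hence "X i i0 = cnj (X i0 i)" using herm[of i0 i] by simp
        thus "cnj (v i) * X i i0 = cnj (X i0 i * v i)" by simp
      qed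
      have C: "qf F Y v = qf F X v - cnj s * s / d"
      proof -
        have "qf F Y v = (\<Sum>i\<in>F. \<Sum>j\<in>F. cnj (v i) * X i j * v j - (cnj (v i) * X i i0) * (X i0 j * v j) / d)"
          unfolding qf_def Y_def
      proof (intro sum.cong refl)
        fix i j assume "j \<in> F"
        hence "c i * cnj (c j) = X i i0 * X i0 j / d" using cc by simp
        thus "cnj (v i) * (X i j - c i * cnj (c j)) * v j = cnj (v i) * X i j * v j - (cnj (v i) * X i i0) * (X i0 j * v j) / d"
          by (simp add: right_diff_distrib left_diff_distrib)
      qed
        also have "\<dots> = qf F X v - (\<Sum>i\<in>F. cnj (v i) * X i i0) * s / d"
          by (simp add: qf_def sum_subtractf s_def sum_distrib_left sum_distrib_right sum_divide_distrib) (rule sum.swap)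
        finally show ?thesis using B by simp
      qed
      have cd: "cnj d = d" using dre by (metis complex_cnj_complex_of_real)
      have "qf (insert i0 F) X v' = qf F Y v"
      proof -
        have "cnj t = - cnj s / d" unfolding t_def using cd by simp
        hence "cnj t * d * t + cnj t * s + cnj s * t = - (cnj s * s / d)"
          unfolding t_def using False by (simp add: field_simps)
        thus ?thesis unfolding A B C by (simp add: algebra_simps)
      qed
      moreover have "0 \<le> qf (insert i0 F) X v'" using insert.prems unfolding psd_qf by blast
      ultimately show "0 \<le> qf F Y v" by simp
    qed
    obtain m :: nat and w :: "nat \<Rightarrow> 'a \<Rightarrow> complex" where mw: "\<forall>i\<in>F. \<forall>j\<in>F. Y i j = (\<Sum>l<m. w l i * cnj (w l j))"
      using insert.IH[OF psdY] by blast
    define w' where "w' l i = (if l = m then c i else if i = i0 then 0 else w l i)" for l i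
    show ?thesis
    proof (intro exI ballI)
      fix i j assume i: "i \<in> insert i0 F" and j: "j \<in> insert i0 F"
      have s1: "(\<Sum>l<Suc m. w' l i * cnj (w' l j)) = (\<Sum>l<m. w' l i * cnj (w' l j)) + c i * cnj (c j)"
        by (simp add: w'_def)
      have s2: "(\<Sum>l<m. w' l i * cnj (w' l j)) = (if i = i0 \<or> j = i0 then 0 else Y i j)"
      proof (cases "i = i0 \<or> j = i0")
        case True then show ?thesis by (auto simp: w'_def)
      next
        case False
        then have "i \<in> F" "j \<in> F" "i \<noteq> i0" "j \<noteq> i0" using i j by auto
        then show ?thesis using mw by (simp add: w'_def)
      qed
      have "X i j = (\<Sum>l<Suc m. w' l i * cnj (w' l j))"
      proof (cases "i = i0 \<or> j = i0")
        case True
        have "X i j = X i i0 * X i0 j / d"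
        proof (cases "i = i0")
          case True then show ?thesis using \<open>d \<noteq> 0\<close> unfolding d_def by simp
        next
          case False then have "j = i0" using \<open>i = i0 \<or> j = i0\<close> by simp
          then show ?thesis using \<open>d \<noteq> 0\<close> unfolding d_def by simp
        qed
        then show ?thesis unfolding s1 s2 cc[OF j] using True by simp
      next
        case False
        then show ?thesis unfolding s1 s2 using cc[OF j] by (simp add: Y_def)
      qed
      thus "X i j = (\<Sum>l<Suc m. w' l i * cnj (w' l j))" .
    qed
  qed
qed



lemma gram_psd:
  assumes "finite L" "finite I"
  shows "psd_on I (\<lambda>i j. \<Sum>l\<in>L. w l i * cnj (w l j))"
  unfolding psd_qf
proof
  fix v
  have "qf I (\<lambda>i j. \<Sum>l\<in>L. w l i * cnj (w l j)) v = (\<Sum>i\<in>I. \<Sum>j\<in>I. \<Sum>l\<in>L. cnj (v i) * w l i * (v j * cnj (w l j)))"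
    unfolding qf_def by (simp add: sum_distrib_left sum_distrib_right mult_ac)
  also have "\<dots> = (\<Sum>i\<in>I. \<Sum>l\<in>L. \<Sum>j\<in>I. cnj (v i) * w l i * (v j * cnj (w l j)))"
    by (rule sum.cong[OF refl]) (rule sum.swap)
  also have "\<dots> = (\<Sum>l\<in>L. \<Sum>i\<in>I. \<Sum>j\<in>I. cnj (v i) * w l i * (v j * cnj (w l j)))"
    by (rule sum.swap)
  also have "\<dots> = (\<Sum>l\<in>L. (\<Sum>i\<in>I. cnj (v i) * w l i) * cnj (\<Sum>j\<in>I. cnj (v j) * w l j))"
    by (simp add: sum_product cnj_sum)
  finally have eq: "qf I (\<lambda>i j. \<Sum>l\<in>L. w l i * cnj (w l j)) v = \<dots>" .
  show "0 \<le> qf I (\<lambda>i j. \<Sum>l\<in>L. w l i * cnj (w l j)) v"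
    unfolding eq
  proof (rule sum_nonneg)
    fix l
    show "0 \<le> (\<Sum>i\<in>I. cnj (v i) * w l i) * cnj (\<Sum>j\<in>I. cnj (v j) * w l j)"
    proof -
      define z where "z = (\<Sum>i\<in>I. cnj (v i) * w l i)"
      have "z * cnj z = of_real ((cmod z)^2)" by (simp add: complex_norm_square del: of_real_power)
      also have "0 \<le> \<dots>" by (simp add: less_eq_complex_def)
      finally show ?thesis unfolding z_def .
    qed
  qed
qed

lemma psd_sum: "(\<And>s. s \<in> S \<Longrightarrow> psd_on I (X s)) \<Longrightarrow> psd_on I (\<lambda>i j. \<Sum>s\<in>S. X s i j)"
  unfolding psd_qf
proof
  fix v assume h: "\<And>s. s \<in> S \<Longrightarrow> \<forall>v. 0 \<le> qf I (X s) v"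
  have "qf I (\<lambda>i j. \<Sum>s\<in>S. X s i j) v = (\<Sum>s\<in>S. qf I (X s) v)"
    unfolding qf_def by (simp add: sum_distrib_left sum_distrib_right sum.swap[of _ S])
  also have "0 \<le> \<dots>" using h by (intro sum_nonneg) auto
  finally show "0 \<le> qf I (\<lambda>i j. \<Sum>s\<in>S. X s i j) v" .
qed

lemma psd_scale: "0 \<le> c \<Longrightarrow> psd_on I X \<Longrightarrow> psd_on I (\<lambda>i j. complex_of_real c * X i j)"
  unfolding psd_qf
proof
  fix v assume c: "0 \<le> c" and h: "\<forall>v. 0 \<le> qf I X v"
  have "qf I (\<lambda>i j. complex_of_real c * X i j) v = of_real c * qf I X v"
    unfolding qf_def by (simp add: sum_distrib_left mult_ac)
  also have "0 \<le> \<dots>" using c h by (intro mult_nonneg_nonneg) (auto simp: less_eq_complex_def)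
  finally show "0 \<le> qf I (\<lambda>i j. complex_of_real c * X i j) v" .
qed

lemma psd_transpose: "psd_on I X \<Longrightarrow> psd_on I (\<lambda>i j. X j i)"
  unfolding psd_qf
proof
  fix v assume h: "\<forall>v. 0 \<le> qf I X v"
  have "qf I (\<lambda>i j. X j i) v = qf I X (\<lambda>i. cnj (v i))"
    unfolding qf_def by (subst sum.swap) (simp add: mult_ac)
  then show "0 \<le> qf I (\<lambda>i j. X j i) v" using h by simp
qed

lemma psd_zero: "(\<And>i j. i \<in> I \<Longrightarrow> j \<in> I \<Longrightarrow> X i j = 0) \<Longrightarrow> psd_on I X"
  using psd_cong[of I X "\<lambda>_ _. 0"] by (simp add: psd_qf qf_def)



lemma idxB_Suc: "bs \<in> idxB dB (Suc n) \<longleftrightarrow> bs \<noteq> [] \<and> hd bs < dB \<and> tl bs \<in> idxB dB n"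
  unfolding idxB_def by (cases bs) auto

lemma prod_gram:
  "(\<forall>t<n. psd_on {..<dB} (F t)) \<Longrightarrow> \<exists>(L :: nat list set) w. finite L \<and>
     (\<forall>bs\<in>idxB dB n. \<forall>bs'\<in>idxB dB n. (\<Prod>t<n. F t (bs!t) (bs'!t)) = (\<Sum>l\<in>L. w l bs * cnj (w l bs')))"
proof (induction n arbitrary: F)
  case 0
  show ?case by (rule exI[of _ "{[]}"], rule exI[of _ "\<lambda>_ _. 1"]) simp
next
  case (Suc n)
  obtain m :: nat and a :: "nat \<Rightarrow> nat \<Rightarrow> complex" where ma:
    "\<forall>i\<in>{..<dB}. \<forall>j\<in>{..<dB}. F 0 i j = (\<Sum>l<m. a l i * cnj (a l j))"
    using psd_decomp[of "{..<dB}" "F 0"] Suc.prems by blast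
  obtain L :: "nat list set" and w where Lw: "finite L"
    "\<forall>bs\<in>idxB dB n. \<forall>bs'\<in>idxB dB n. (\<Prod>t<n. F (Suc t) (bs!t) (bs'!t)) = (\<Sum>l\<in>L. w l bs * cnj (w l bs'))"
    using Suc.IH[of "\<lambda>t. F (Suc t)"] Suc.prems by auto
  define L' where "L' = (\<lambda>(l, ls). l # ls) ` ({..<m} \<times> L)"
  define w' where "w' ls bs = a (hd ls) (hd bs) * w (tl ls) (tl bs)" for ls bs
  have inj: "inj_on (\<lambda>(l, ls). l # ls) ({..<m} \<times> L)" by (auto simp: inj_on_def)
  show ?case
  proof (intro exI conjI ballI)
    show "finite L'" unfolding L'_def using Lw(1) by simp
    fix bs bs' assume bs: "bs \<in> idxB dB (Suc n)" and bs': "bs' \<in> idxB dB (Suc n)"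
    have nth0: "\<And>xs. xs \<noteq> [] \<Longrightarrow> xs ! 0 = hd xs" by (case_tac xs) auto
    have nthS: "\<And>xs t. xs \<noteq> [] \<Longrightarrow> xs ! Suc t = tl xs ! t" by (case_tac xs) auto
    have "(\<Prod>t<Suc n. F t (bs!t) (bs'!t)) = F 0 (hd bs) (hd bs') * (\<Prod>t<n. F (Suc t) (tl bs!t) (tl bs'!t))"
      using bs bs' by (subst prod.lessThan_Suc_shift) (simp add: idxB_Suc nth0 nthS)
    also have "\<dots> = (\<Sum>l<m. a l (hd bs) * cnj (a l (hd bs'))) * (\<Sum>ls\<in>L. w ls (tl bs) * cnj (w ls (tl bs')))"
      using bs bs' ma Lw(2) by (simp add: idxB_Suc)
    also have "\<dots> = (\<Sum>(l, ls)\<in>{..<m} \<times> L. (a l (hd bs) * w ls (tl bs)) * cnj (a l (hd bs') * w ls (tl bs')))"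
      unfolding sum_product sum.cartesian_product by (simp add: case_prod_beta mult_ac)
    also have "\<dots> = (\<Sum>x\<in>L'. w' x bs * cnj (w' x bs'))"
      unfolding L'_def by (subst sum.reindex[OF inj]) (simp add: w'_def case_prod_beta)
    finally show "(\<Prod>t<Suc n. F t (bs!t) (bs'!t)) = (\<Sum>x\<in>L'. w' x bs * cnj (w' x bs'))" .
  qed
qed

lemma finite_idxB: "finite (idxB dB n)"
proof -
  have "idxB dB n \<subseteq> {xs. set xs \<subseteq> {..<dB} \<and> length xs = n}" unfolding idxB_def by auto
  thus ?thesis using finite_lists_length_eq[of "{..<dB}" n] by (metis finite_subset finite_lessThan)
qed

lemma main_psd:
  assumes "psd_on {..<dA} R" "\<forall>t<k. psd_on {..<dB} (F t)"
  shows "psd_on (idxAB dA dB k) (\<lambda>(a, bs) (a', bs'). R a a' * (\<Prod>t<k. F t (bs!t) (bs'!t)))"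
proof -
  obtain m :: nat and r :: "nat \<Rightarrow> nat \<Rightarrow> complex" where mr:
    "\<forall>i\<in>{..<dA}. \<forall>j\<in>{..<dA}. R i j = (\<Sum>l<m. r l i * cnj (r l j))"
    using psd_decomp[of "{..<dA}" R] assms(1) by blast
  obtain L :: "nat list set" and w where Lw: "finite L"
    "\<forall>bs\<in>idxB dB k. \<forall>bs'\<in>idxB dB k. (\<Prod>t<k. F t (bs!t) (bs'!t)) = (\<Sum>l\<in>L. w l bs * cnj (w l bs'))"
    using prod_gram[of k dB F] assms(2) by auto
  define W where "W = (\<lambda>(l, ls) (a, bs). r l a * w ls bs)"
  have fin: "finite (idxAB dA dB k)" unfolding idxAB_def using finite_idxB by simp
  have "psd_on (idxAB dA dB k) (\<lambda>p q. \<Sum>x\<in>{..<m} \<times> L. W x p * cnj (W x q))"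
    by (rule gram_psd) (use Lw(1) fin in auto)
  moreover have "\<forall>p\<in>idxAB dA dB k. \<forall>q\<in>idxAB dA dB k.
      (\<lambda>(a, bs) (a', bs'). R a a' * (\<Prod>t<k. F t (bs!t) (bs'!t))) p q = (\<Sum>x\<in>{..<m} \<times> L. W x p * cnj (W x q))"
  proof (intro ballI)
    fix p q assume p: "p \<in> idxAB dA dB k" and q: "q \<in> idxAB dA dB k"
    obtain a bs where pa: "p = (a, bs)" by (cases p)
    obtain a' bs' where qa: "q = (a', bs')" by (cases q)
    have "R a a' * (\<Prod>t<k. F t (bs!t) (bs'!t)) = (\<Sum>l<m. r l a * cnj (r l a')) * (\<Sum>ls\<in>L. w ls bs * cnj (w ls bs'))"
      using p q mr Lw(2) unfolding pa qa idxAB_def by simp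
    also have "\<dots> = (\<Sum>x\<in>{..<m} \<times> L. W x (a, bs) * cnj (W x (a', bs')))"
      unfolding sum_product sum.cartesian_product by (simp add: W_def case_prod_beta mult_ac)
    finally show "(\<lambda>(a, bs) (a', bs'). R a a' * (\<Prod>t<k. F t (bs!t) (bs'!t))) p q = (\<Sum>x\<in>{..<m} \<times> L. W x p * cnj (W x q))"
      unfolding pa qa by simp
  qed
  ultimately show ?thesis using psd_cong by (smt (verit))
qed



lemma lists_Suc_eq: "{ys. length ys = Suc n \<and> set ys \<subseteq> S} = (\<lambda>(s, ys). s # ys) ` (S \<times> {ys. length ys = n \<and> set ys \<subseteq> S})"
proof (intro set_eqI iffI)
  fix ys assume "ys \<in> {ys. length ys = Suc n \<and> set ys \<subseteq> S}"
  then obtain s zs where "ys = s # zs" "length zs = n" "s \<in> S" "set zs \<subseteq> S"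
    by (auto simp: length_Suc_conv)
  then show "ys \<in> (\<lambda>(s, ys). s # ys) ` (S \<times> {ys. length ys = n \<and> set ys \<subseteq> S})" by auto
qed auto

lemma sum_lists_prod:
  fixes f :: "nat \<Rightarrow> 'a \<Rightarrow> 'b::comm_semiring_1"
  shows "finite S \<Longrightarrow> (\<Sum>ys\<in>{ys. length ys = n \<and> set ys \<subseteq> S}. \<Prod>t<n. f t (ys!t)) = (\<Prod>t<n. \<Sum>s\<in>S. f t s)"
proof (induction n arbitrary: f)
  case 0
  have "{ys. length ys = 0 \<and> set ys \<subseteq> S} = {[]}" by auto
  then show ?case by simp
next
  case (Suc n)
  have inj: "inj_on (\<lambda>(s, ys). s # ys) (S \<times> {ys. length ys = n \<and> set ys \<subseteq> S})" by (auto simp: inj_on_def)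
  have "(\<Sum>ys\<in>{ys. length ys = Suc n \<and> set ys \<subseteq> S}. \<Prod>t<Suc n. f t (ys!t))
      = (\<Sum>(s, ys)\<in>S \<times> {ys. length ys = n \<and> set ys \<subseteq> S}. \<Prod>t<Suc n. f t ((s # ys)!t))"
    unfolding lists_Suc_eq by (subst sum.reindex[OF inj]) (simp add: case_prod_beta)
  also have "\<dots> = (\<Sum>s\<in>S. \<Sum>ys\<in>{ys. length ys = n \<and> set ys \<subseteq> S}. f 0 s * (\<Prod>t<n. f (Suc t) (ys!t)))"
    unfolding sum.cartesian_product[symmetric] by (simp add: prod.lessThan_Suc_shift del: prod.lessThan_Suc)
  also have "\<dots> = (\<Sum>s\<in>S. f 0 s * (\<Sum>ys\<in>{ys. length ys = n \<and> set ys \<subseteq> S}. \<Prod>t<n. f (Suc t) (ys!t)))"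
    by (rule sum.cong[OF refl]) (rule sum_distrib_left[symmetric])
  also have "\<dots> = (\<Sum>s\<in>S. f 0 s * (\<Prod>t<n. \<Sum>s\<in>S. f (Suc t) s))"
    using Suc.IH[of "\<lambda>t. f (Suc t)"] Suc.prems by simp
  also have "\<dots> = (\<Sum>s\<in>S. f 0 s) * (\<Prod>t<n. \<Sum>s\<in>S. f (Suc t) s)"
    by (simp add: sum_distrib_right)
  also have "\<dots> = (\<Prod>t<Suc n. \<Sum>s\<in>S. f t s)" by (simp add: prod.lessThan_Suc_shift del: prod.lessThan_Suc)
  finally show ?case .
qed

lemma bitstrings_eq: "bitstrings n = {ys. length ys = n \<and> set ys \<subseteq> {0, 1}}"
  unfolding bitstrings_def ..

lemma idxB_eq: "idxB dB n = {ys. length ys = n \<and> set ys \<subseteq> {..<dB}}"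
  unfolding idxB_def by auto

lemma prod_delta: "length bs = n \<Longrightarrow> length bs' = n \<Longrightarrow> (\<Prod>t<n. delta (bs!t) (bs'!t)) = delta bs bs'"
proof (cases "bs = bs'")
  case True
  then show ?thesis by (simp add: delta_def)
next
  case False
  assume l: "length bs = n" "length bs' = n"
  then obtain t where "t < n" "bs!t \<noteq> bs'!t" using False nth_equalityI by metis
  then show ?thesis using False by (auto simp: delta_def intro!: prod_zero)
qed

lemma card_idxB: "card (idxB dB n) = dB ^ n"
proof -
  have "card (idxB dB n) = (\<Sum>ys\<in>idxB dB n. \<Prod>t<n. (\<lambda>t s. 1::nat) t (ys!t))" by simp
  also have "\<dots> = (\<Prod>t<n. \<Sum>s\<in>{..<dB}. (1::nat))" unfolding idxB_eq by (rule sum_lists_prod) simp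
  finally show ?thesis by simp
qed



definition LL :: "(nat \<Rightarrow> nat \<Rightarrow> nat \<Rightarrow> complex) \<Rightarrow> nat \<Rightarrow> nat \<Rightarrow> nat \<Rightarrow> nat \<Rightarrow> complex" where
  "LL Lam b x = (if b = 0 then Lam x else (\<lambda>i j. delta i j - Lam x i j))"

definition PP :: "nat \<Rightarrow> (nat \<Rightarrow> nat \<Rightarrow> nat \<Rightarrow> complex) \<Rightarrow> nat \<Rightarrow> nat list \<Rightarrow> nat list \<Rightarrow> nat list \<Rightarrow> complex" where
  "PP k Lam x y bs bs' = (\<Prod>t<k. LL Lam (y!t) x (bs!t) (bs'!t))"

definition QQ :: "nat \<Rightarrow> nat \<Rightarrow> (nat \<Rightarrow> nat \<Rightarrow> nat \<Rightarrow> complex) \<Rightarrow> (nat \<Rightarrow> nat \<Rightarrow> nat \<Rightarrow> complex) \<Rightarrow> nat list \<Rightarrow> opAB" where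
  "QQ k M \<rho> Lam y = (\<lambda>(a, bs) (a', bs'). (\<Sum>x<M. \<rho> x a' a * PP k Lam x y bs bs') / of_nat M)"

definition rhoA :: "nat \<Rightarrow> (nat \<Rightarrow> nat \<Rightarrow> nat \<Rightarrow> complex) \<Rightarrow> nat \<Rightarrow> nat \<Rightarrow> complex" where
  "rhoA M \<rho> = (\<lambda>a a'. (\<Sum>x<M. \<rho> x a' a) / of_nat M)"

lemma psd_eqI: "psd_on I X \<Longrightarrow> (\<And>i j. i \<in> I \<Longrightarrow> j \<in> I \<Longrightarrow> X i j = Y i j) \<Longrightarrow> psd_on I Y"
  using psd_cong[of I X Y] by blast

lemma LL_sum: "(\<Sum>b\<in>{0::nat, 1}. LL Lam b x i j) = delta i j"
  by (simp add: LL_def)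

lemma sum_bits_LL:
  "(\<Sum>y\<in>bitstrings n. \<Prod>t<n. LL Lam (y!t) x (f t) (g t)) = (\<Prod>t<n. delta (f t) (g t))"
proof -
  have "(\<Sum>y\<in>bitstrings n. \<Prod>t<n. LL Lam (y!t) x (f t) (g t)) = (\<Prod>t<n. \<Sum>b\<in>{0::nat,1}. LL Lam b x (f t) (g t))"
    unfolding bitstrings_eq by (rule sum_lists_prod) simp
  thus ?thesis by (simp only: LL_sum)
qed

lemma Qpsd:
  assumes "\<forall>x<M. psd_on {..<dA} (\<rho> x)" "\<forall>x<M. \<forall>t<k. psd_on {..<dB} (G x t)"
  shows "psd_on (idxAB dA dB k) (\<lambda>(a, bs) (a', bs'). (\<Sum>x<M. \<rho> x a' a * (\<Prod>t<k. G x t (bs!t) (bs'!t))) / of_nat M)"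
proof -
  have "psd_on (idxAB dA dB k) (\<lambda>p q. \<Sum>x<M. complex_of_real (1 / real M) *
      (\<lambda>(a, bs) (a', bs'). \<rho> x a' a * (\<Prod>t<k. G x t (bs!t) (bs'!t))) p q)"
  proof (rule psd_sum, rule psd_scale)
    fix x assume "x \<in> {..<M}"
    thus "psd_on (idxAB dA dB k) (\<lambda>(a, bs) (a', bs'). \<rho> x a' a * (\<Prod>t<k. G x t (bs!t) (bs'!t)))"
      using assms by (intro main_psd[OF psd_transpose]) auto
  qed simp
  moreover have "\<And>p q. (\<Sum>x<M. complex_of_real (1 / real M) * (\<lambda>(a, bs) (a', bs'). \<rho> x a' a * (\<Prod>t<k. G x t (bs!t) (bs'!t))) p q)
     = (\<lambda>(a, bs) (a', bs'). (\<Sum>x<M. \<rho> x a' a * (\<Prod>t<k. G x t (bs!t) (bs'!t))) / of_nat M) p q"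
    by (simp add: case_prod_beta sum_divide_distrib)
  ultimately show ?thesis by (rule psd_eqI)
qed

lemma LL_psd:
  assumes "povm_on {..<dB} M Lam" "x < M"
  shows "psd_on {..<dB} (LL Lam b x)"
proof (cases "b = 0")
  case True
  then show ?thesis using assms unfolding povm_on_def LL_def by simp
next
  case False
  have "psd_on {..<dB} (\<lambda>i j. \<Sum>x'\<in>{..<M} - {x}. Lam x' i j)"
    by (rule psd_sum) (use assms in \<open>auto simp: povm_on_def\<close>)
  moreover have "\<And>i j. i \<in> {..<dB} \<Longrightarrow> j \<in> {..<dB} \<Longrightarrow> (\<Sum>x'\<in>{..<M} - {x}. Lam x' i j) = LL Lam b x i j"
  proof -
    fix i j assume "i \<in> {..<dB}" "j \<in> {..<dB}"
    hence "(\<Sum>x'<M. Lam x' i j) = delta i j" using assms unfolding povm_on_def by blast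
    moreover have "(\<Sum>x'<M. Lam x' i j) = Lam x i j + (\<Sum>x'\<in>{..<M} - {x}. Lam x' i j)"
      using assms(2) by (subst sum.remove[of _ x]) auto
    ultimately show "(\<Sum>x'\<in>{..<M} - {x}. Lam x' i j) = LL Lam b x i j"
      using False unfolding LL_def by (simp add: algebra_simps)
  qed
  ultimately show ?thesis by (rule psd_eqI)
qed



lemma PP_cons:
  assumes "bs \<noteq> []" "bs' \<noteq> []"
  shows "PP (Suc n) Lam x (b # y) bs bs' = LL Lam b x (hd bs) (hd bs') * PP n Lam x y (tl bs) (tl bs')"
proof -
  have nth0: "\<And>xs. xs \<noteq> [] \<Longrightarrow> xs ! 0 = hd xs" by (case_tac xs) auto
  have nthS: "\<And>xs t. xs \<noteq> [] \<Longrightarrow> xs ! Suc t = tl xs ! t" by (case_tac xs) auto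
  show ?thesis unfolding PP_def using assms
    by (subst prod.lessThan_Suc_shift) (simp add: nth0 nthS)
qed

lemma PP_snoc:
  assumes "length y = n"
  shows "PP (Suc n) Lam x (y @ [b]) bs bs' = PP n Lam x y bs bs' * LL Lam b x (bs!n) (bs'!n)"
  unfolding PP_def using assms by (simp add: nth_append)

lemma PP_butlast:
  assumes "length bs = Suc n" "length bs' = Suc n"
  shows "PP n Lam x y (butlast bs @ [c]) (butlast bs' @ [c']) = PP n Lam x y bs bs'"
  unfolding PP_def using assms by (intro prod.cong refl) (simp add: nth_append nth_butlast)

lemma sum_PP:
  assumes "length bs = n" "length bs' = n"
  shows "(\<Sum>y\<in>bitstrings n. PP n Lam x y bs bs') = delta bs bs'"
  unfolding PP_def using sum_bits_LL[where n=n and Lam=Lam and x=x and f="\<lambda>t. bs!t" and g="\<lambda>t. bs'!t"] prod_delta[OF assms] by simp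

lemma ptrace_QQ:
  assumes "\<forall>x<M. trace_on {..<dA} (\<rho> x) = 1"
  shows "ptrace_A dA (QQ k M \<rho> Lam y) bs bs' = (\<Sum>x<M. PP k Lam x y bs bs') / of_nat M"
proof -
  have "ptrace_A dA (QQ k M \<rho> Lam y) bs bs' = (\<Sum>a<dA. \<Sum>x<M. \<rho> x a a * PP k Lam x y bs bs') / of_nat M"
    unfolding ptrace_A_def QQ_def by (simp add: sum_divide_distrib)
  also have "\<dots> = (\<Sum>x<M. (\<Sum>a<dA. \<rho> x a a) * PP k Lam x y bs bs') / of_nat M"
    by (subst sum.swap) (simp add: sum_distrib_right)
  also have "\<dots> = (\<Sum>x<M. PP k Lam x y bs bs') / of_nat M"
    using assms unfolding trace_on_def by simp
  finally show ?thesis .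
qed

lemma c1:
  assumes "bs \<in> idxB dB k" "bs' \<in> idxB dB k"
  shows "(\<Sum>y\<in>bitstrings k. QQ k M \<rho> Lam y (a, bs) (a', bs')) = rhoA M \<rho> a a' * delta bs bs'"
proof -
  have l: "length bs = k" "length bs' = k" using assms unfolding idxB_def by auto
  have "(\<Sum>y\<in>bitstrings k. QQ k M \<rho> Lam y (a, bs) (a', bs')) = (\<Sum>y\<in>bitstrings k. \<Sum>x<M. \<rho> x a' a * PP k Lam x y bs bs') / of_nat M"
    unfolding QQ_def by (simp add: sum_divide_distrib)
  also have "\<dots> = (\<Sum>x<M. \<rho> x a' a * (\<Sum>y\<in>bitstrings k. PP k Lam x y bs bs')) / of_nat M"
    by (subst sum.swap) (simp add: sum_distrib_left)
  also have "\<dots> = rhoA M \<rho> a a' * delta bs bs'"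
    unfolding sum_PP[OF l] rhoA_def by (simp add: sum_distrib_right)
  finally show ?thesis .
qed

lemma c_state:
  assumes "\<forall>x<M. is_state_on {..<dA} (\<rho> x)" "1 \<le> M"
  shows "is_state_on {..<dA} (rhoA M \<rho>)"
  unfolding is_state_on_def
proof
  have "psd_on {..<dA} (\<lambda>i j. \<Sum>x<M. complex_of_real (1 / real M) * \<rho> x j i)"
  proof (rule psd_sum, rule psd_scale)
    fix x assume "x \<in> {..<M}"
    then show "psd_on {..<dA} (\<lambda>i j. \<rho> x j i)"
      using assms(1) unfolding is_state_on_def by (intro psd_transpose[of _ "\<rho> x"]) auto
  qed simp
  moreover have "\<And>i j. (\<Sum>x<M. complex_of_real (1 / real M) * \<rho> x j i) = rhoA M \<rho> i j"
    unfolding rhoA_def by (simp add: sum_divide_distrib)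
  ultimately show "psd_on {..<dA} (rhoA M \<rho>)" by (rule psd_eqI)
  have "trace_on {..<dA} (rhoA M \<rho>) = (\<Sum>x<M. trace_on {..<dA} (\<rho> x)) / of_nat M"
    unfolding trace_on_def rhoA_def sum_divide_distrib[symmetric] by (subst sum.swap) (rule refl)
  also have "\<dots> = 1" using assms unfolding is_state_on_def by simp
  finally show "trace_on {..<dA} (rhoA M \<rho>) = 1" .
qed



lemma c2:
  assumes "\<forall>x<M. is_state_on {..<dA} (\<rho> x)" "povm_on {..<dB} M Lam"
  shows "psd_on (idxAB dA dB k) (QQ k M \<rho> Lam y)"
  unfolding QQ_def PP_def
  by (rule Qpsd[where G="\<lambda>x t. LL Lam (y!t) x"]) (use assms LL_psd in \<open>auto simp: is_state_on_def\<close>)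

lemma nth_permute: "t < length xs \<Longrightarrow> permute_list_by \<pi> xs ! t = xs ! \<pi> t"
  unfolding permute_list_by_def by simp

lemma length_permute: "length (permute_list_by \<pi> xs) = length xs"
  unfolding permute_list_by_def by simp

lemma c3:
  assumes "\<pi> permutes {..<k}" "y \<in> bitstrings k" "p \<in> idxAB dA dB k" "p' \<in> idxAB dA dB k"
  shows "conj_perm \<pi> (QQ k M \<rho> Lam (permute_list_by \<pi> y)) p p' = QQ k M \<rho> Lam y p p'"
proof -
  obtain a bs where p: "p = (a, bs)" by (cases p)
  obtain a' bs' where p': "p' = (a', bs')" by (cases p')
  have l: "length y = k" "length bs = k" "length bs' = k"
    using assms p p' unfolding bitstrings_def idxAB_def idxB_def by auto
  have "PP k Lam x (permute_list_by \<pi> y) (permute_list_by \<pi> bs) (permute_list_by \<pi> bs') = PP k Lam x y bs bs'" for x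
  proof -
    have "PP k Lam x (permute_list_by \<pi> y) (permute_list_by \<pi> bs) (permute_list_by \<pi> bs')
        = (\<Prod>t<k. (\<lambda>s. LL Lam (y!s) x (bs!s) (bs'!s)) (\<pi> t))"
      unfolding PP_def using l by (intro prod.cong refl) (simp add: nth_permute)
    also have "\<dots> = (\<Prod>t<k. LL Lam (y!t) x (bs!t) (bs'!t))"
      using prod.permute[OF assms(1), of "\<lambda>s. LL Lam (y!s) x (bs!s) (bs'!s)"] by (simp add: comp_def)
    finally show ?thesis unfolding PP_def .
  qed
  then show ?thesis unfolding p p' conj_perm_def QQ_def by simp
qed

lemma nth_ptrans:
  assumes "length bs = k" "length bs' = k" "i \<le> k" "t < k"
  shows "(take i bs' @ drop i bs) ! t = (if t < i then bs' ! t else bs ! t)"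
  using assms by (simp add: nth_append min_def)

lemma c4:
  assumes "\<forall>x<M. is_state_on {..<dA} (\<rho> x)" "povm_on {..<dB} M Lam" "i \<le> k"
  shows "psd_on (idxAB dA dB k) (ptrans i (QQ k M \<rho> Lam y))"
proof -
  define G where "G x t = (if t < i then (\<lambda>u v. LL Lam (y!t) x v u) else LL Lam (y!t) x)" for x t
  have "psd_on (idxAB dA dB k) (\<lambda>(a, bs) (a', bs'). (\<Sum>x<M. \<rho> x a' a * (\<Prod>t<k. G x t (bs!t) (bs'!t))) / of_nat M)"
  proof (rule Qpsd)
    show "\<forall>x<M. psd_on {..<dA} (\<rho> x)" using assms(1) by (auto simp: is_state_on_def)
    show "\<forall>x<M. \<forall>t<k. psd_on {..<dB} (G x t)"
    proof (intro allI impI)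
      fix x t assume "x < M" "t < k"
      then have "psd_on {..<dB} (LL Lam (y!t) x)" using LL_psd assms(2) by blast
      then show "psd_on {..<dB} (G x t)" unfolding G_def
        using psd_transpose[of "{..<dB}" "LL Lam (y!t) x"] by simp
    qed
  qed
  then show ?thesis
  proof (rule psd_eqI)
    fix p q assume p: "p \<in> idxAB dA dB k" and q: "q \<in> idxAB dA dB k"
    obtain a bs where pa: "p = (a, bs)" by (cases p)
    obtain a' bs' where qa: "q = (a', bs')" by (cases q)
    have l: "length bs = k" "length bs' = k"
      using p q pa qa unfolding idxAB_def idxB_def by auto
    have "PP k Lam x y (take i bs' @ drop i bs) (take i bs @ drop i bs') = (\<Prod>t<k. G x t (bs!t) (bs'!t))" for x
      unfolding PP_def G_def using l assms(3) by (intro prod.cong refl) (simp add: nth_ptrans)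
    then show "(\<lambda>(a, bs) (a', bs'). (\<Sum>x<M. \<rho> x a' a * (\<Prod>t<k. G x t (bs!t) (bs'!t))) / of_nat M) p q
          = ptrans i (QQ k M \<rho> Lam y) p q"
      unfolding pa qa ptrans_def QQ_def by simp
  qed
qed

lemma delta_cons: "bs \<noteq> [] \<Longrightarrow> bs' \<noteq> [] \<Longrightarrow> delta (hd bs) (hd bs') * delta (tl bs) (tl bs') = delta bs bs'"
  by (cases bs; cases bs') (auto simp: delta_def)

lemma c5:
  assumes "\<forall>x<M. is_state_on {..<dA} (\<rho> x)" "povm_on {..<dB} M Lam" "1 \<le> k"
  shows "psd_on (idxB dB k) (\<lambda>bs bs'. complex_of_real (1 / real M) * delta bs bs' -
        (\<Sum>y'\<in>bitstrings (k - 1). ptrace_A dA (QQ k M \<rho> Lam (0 # y')) bs bs'))"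
proof (rule psd_zero)
  fix bs bs' assume bs: "bs \<in> idxB dB k" and bs': "bs' \<in> idxB dB k"
  obtain n where k: "k = Suc n" using assms(3) by (cases k) auto
  have tr: "\<forall>x<M. trace_on {..<dA} (\<rho> x) = 1" using assms(1) by (auto simp: is_state_on_def)
  have l: "length bs = Suc n" "length bs' = Suc n" using bs bs' k unfolding idxB_def by auto
  hence ne: "bs \<noteq> []" "bs' \<noteq> []" by auto
  have lt: "length (tl bs) = n" "length (tl bs') = n" using l by auto
  have hd: "hd bs < dB" "hd bs' < dB" using bs bs' ne unfolding idxB_def by auto
  have "(\<Sum>y'\<in>bitstrings (k - 1). ptrace_A dA (QQ k M \<rho> Lam (0 # y')) bs bs')
      = (\<Sum>y'\<in>bitstrings n. \<Sum>x<M. Lam x (hd bs) (hd bs') * PP n Lam x y' (tl bs) (tl bs')) / of_nat M"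
    unfolding ptrace_QQ[OF tr] k by (simp add: PP_cons[OF ne] LL_def sum_divide_distrib)
  also have "\<dots> = (\<Sum>x<M. Lam x (hd bs) (hd bs') * (\<Sum>y'\<in>bitstrings n. PP n Lam x y' (tl bs) (tl bs'))) / of_nat M"
    by (subst sum.swap) (simp add: sum_distrib_left)
  also have "\<dots> = (\<Sum>x<M. Lam x (hd bs) (hd bs')) * delta (tl bs) (tl bs') / of_nat M"
    unfolding sum_PP[OF lt] by (simp add: sum_distrib_right)
  also have "\<dots> = delta bs bs' / of_nat M"
    using assms(2) hd delta_cons[OF ne] unfolding povm_on_def by simp
  finally show "complex_of_real (1 / real M) * delta bs bs' -
        (\<Sum>y'\<in>bitstrings (k - 1). ptrace_A dA (QQ k M \<rho> Lam (0 # y')) bs bs') = 0"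
    by simp
qed



lemma c6:
  assumes "\<forall>x<M. is_state_on {..<dA} (\<rho> x)" "1 \<le> k" "0 < dB"
    and y': "y' \<in> bitstrings (k - 1)" and bs: "bs \<in> idxB dB k" and bs': "bs' \<in> idxB dB k"
  shows "(\<Sum>yk\<in>{0, 1}. ptrace_A dA (QQ k M \<rho> Lam (y' @ [yk])) bs bs') =
        (1 / of_nat dB) * (\<Sum>yk\<in>{0, 1}. ptrace_ABk_tensor_I dA dB (QQ k M \<rho> Lam (y' @ [yk])) bs bs')"
proof -
  obtain n where k: "k = Suc n" using assms(2) by (cases k) auto
  have tr: "\<forall>x<M. trace_on {..<dA} (\<rho> x) = 1" using assms(1) by (auto simp: is_state_on_def)
  have l: "length bs = Suc n" "length bs' = Suc n" using bs bs' k unfolding idxB_def by auto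
  have ly: "length y' = n" using y' k unfolding bitstrings_def by auto
  define P where "P x = PP n Lam x y' bs bs'" for x
  define D where "D = delta (bs!n) (bs'!n)"
  have "(\<Sum>yk\<in>{0, 1}. ptrace_A dA (QQ k M \<rho> Lam (y' @ [yk])) bs bs')
      = (\<Sum>yk\<in>{0::nat, 1}. \<Sum>x<M. P x * LL Lam yk x (bs!n) (bs'!n)) / of_nat M"
    unfolding ptrace_QQ[OF tr] k PP_snoc[OF ly] P_def by (simp add: sum_divide_distrib add_divide_distrib)
  also have "\<dots> = (\<Sum>x<M. P x * (\<Sum>yk\<in>{0::nat, 1}. LL Lam yk x (bs!n) (bs'!n))) / of_nat M"
    by (subst sum.swap) (simp add: sum_distrib_left distrib_left)
  also have "\<dots> = (\<Sum>x<M. P x) * D / of_nat M"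
    unfolding LL_sum D_def by (simp add: sum_distrib_right)
  finally have L: "(\<Sum>yk\<in>{0, 1}. ptrace_A dA (QQ k M \<rho> Lam (y' @ [yk])) bs bs') = (\<Sum>x<M. P x) * D / of_nat M" .
  have inner: "(\<Sum>a<dA. \<Sum>c<dB. QQ k M \<rho> Lam (y' @ [yk]) (a, butlast bs @ [c]) (a, butlast bs' @ [c]))
      = (\<Sum>c<dB. \<Sum>x<M. P x * LL Lam yk x c c) / of_nat M" for yk
  proof -
    have "(\<Sum>a<dA. \<Sum>c<dB. QQ k M \<rho> Lam (y' @ [yk]) (a, butlast bs @ [c]) (a, butlast bs' @ [c]))
        = (\<Sum>c<dB. ptrace_A dA (QQ k M \<rho> Lam (y' @ [yk])) (butlast bs @ [c]) (butlast bs' @ [c]))"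
      unfolding ptrace_A_def by (subst sum.swap) simp
    also have "\<dots> = (\<Sum>c<dB. (\<Sum>x<M. P x * LL Lam yk x c c) / of_nat M)"
    proof (rule sum.cong[OF refl])
      fix c
      have ln: "length (butlast bs) = n" "length (butlast bs') = n" using l by auto
      show "ptrace_A dA (QQ k M \<rho> Lam (y' @ [yk])) (butlast bs @ [c]) (butlast bs' @ [c]) = (\<Sum>x<M. P x * LL Lam yk x c c) / of_nat M"
        unfolding ptrace_QQ[OF tr] k PP_snoc[OF ly] P_def PP_butlast[OF l] using ln by (simp add: nth_append)
    qed
    finally show ?thesis by (simp add: sum_divide_distrib)
  qed
  have lastn: "last bs = bs!n" "last bs' = bs'!n"
    using l(1) apply (cases bs rule: rev_cases) apply (auto simp: nth_append)[2]
    using l(2) apply (cases bs' rule: rev_cases) apply (auto simp: nth_append)[2]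
    done
  have "(\<Sum>yk\<in>{0, 1}. ptrace_ABk_tensor_I dA dB (QQ k M \<rho> Lam (y' @ [yk])) bs bs')
      = (\<Sum>yk\<in>{0::nat, 1}. (\<Sum>c<dB. \<Sum>x<M. P x * LL Lam yk x c c)) / of_nat M * D"
  proof -
    have "(\<Sum>yk\<in>{0, 1}. ptrace_ABk_tensor_I dA dB (QQ k M \<rho> Lam (y' @ [yk])) bs bs')
       = (\<Sum>yk\<in>{0::nat, 1}. (\<Sum>c<dB. \<Sum>x<M. P x * LL Lam yk x c c) / of_nat M * D)"
      unfolding ptrace_ABk_tensor_I_def inner lastn D_def by (rule refl)
    also have "\<dots> = (\<Sum>yk\<in>{0::nat, 1}. (\<Sum>c<dB. \<Sum>x<M. P x * LL Lam yk x c c)) / of_nat M * D"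
      by (simp only: sum_divide_distrib[symmetric] sum_distrib_right[symmetric])
    finally show ?thesis .
  qed
  also have "(\<Sum>yk\<in>{0::nat, 1}. (\<Sum>c<dB. \<Sum>x<M. P x * LL Lam yk x c c)) = (\<Sum>c<dB. \<Sum>x<M. P x * (\<Sum>yk\<in>{0::nat, 1}. LL Lam yk x c c))"
    by (simp add: sum_distrib_left sum.distrib distrib_left)
  also have "\<dots> = of_nat dB * (\<Sum>x<M. P x)"
    unfolding LL_sum by (simp add: delta_def)
  finally have R: "(\<Sum>yk\<in>{0, 1}. ptrace_ABk_tensor_I dA dB (QQ k M \<rho> Lam (y' @ [yk])) bs bs') = of_nat dB * (\<Sum>x<M. P x) / of_nat M * D" .
  show ?thesis unfolding L R using assms(3) by simp
qed



lemma sum_pair: "(\<Sum>p\<in>A \<times> B. f p) = (\<Sum>a\<in>A. \<Sum>b\<in>B. f (a, b))"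
  by (simp add: sum.cartesian_product)

lemma sum_idxB_Suc: "(\<Sum>bs\<in>idxB dB (Suc n). f bs) = (\<Sum>b<dB. \<Sum>r\<in>idxB dB n. f (b # r))"
proof -
  have inj: "inj_on (\<lambda>(s, ys). s # ys) ({..<dB} \<times> {ys. length ys = n \<and> set ys \<subseteq> {..<dB}})"
    by (auto simp: inj_on_def)
  show ?thesis unfolding idxB_eq lists_Suc_eq
    by (subst sum.reindex[OF inj]) (simp add: sum_pair)
qed

lemma sum_delta_tl:
  assumes "r \<in> idxB dB n"
  shows "(\<Sum>bs'\<in>idxB dB (Suc n). G (hd bs') * delta r (tl bs')) = (\<Sum>b'<dB. G b')"
proof -
  have "(\<Sum>bs'\<in>idxB dB (Suc n). G (hd bs') * delta r (tl bs')) = (\<Sum>b'<dB. \<Sum>r'\<in>idxB dB n. G b' * delta r r')"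
    unfolding sum_idxB_Suc by simp
  also have "\<dots> = (\<Sum>b'<dB. G b')"
  proof (rule sum.cong[OF refl])
    fix b'
    have "(\<Sum>r'\<in>idxB dB n. G b' * delta r r') = (\<Sum>r'\<in>idxB dB n. if r = r' then G b' else 0)"
      by (rule sum.cong[OF refl]) (simp add: delta_def)
    also have "\<dots> = G b'" using assms finite_idxB by (simp add: sum.delta)
    finally show "(\<Sum>r'\<in>idxB dB n. G b' * delta r r') = G b'" .
  qed
  finally show ?thesis .
qed

lemma sum_hd:
  "(\<Sum>bs\<in>idxB dB (Suc n). G (hd bs)) = (\<Sum>b<dB. of_nat (dB ^ n) * G b)"
  unfolding sum_idxB_Suc by (simp add: card_idxB)

lemma c7a:
  assumes "bs \<in> idxB dB (Suc n)" "bs' \<in> idxB dB (Suc n)"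
  shows "(\<Sum>y'\<in>bitstrings n. QQ (Suc n) M \<rho> Lam (0 # y') (a, bs) (a', bs'))
       = (\<Sum>x<M. \<rho> x a' a * Lam x (hd bs) (hd bs')) / of_nat M * delta (tl bs) (tl bs')"
proof -
  have ne: "bs \<noteq> []" "bs' \<noteq> []" using assms unfolding idxB_def by auto
  have lt: "length (tl bs) = n" "length (tl bs') = n" using assms unfolding idxB_def by auto
  have "(\<Sum>y'\<in>bitstrings n. QQ (Suc n) M \<rho> Lam (0 # y') (a, bs) (a', bs'))
      = (\<Sum>y'\<in>bitstrings n. \<Sum>x<M. \<rho> x a' a * Lam x (hd bs) (hd bs') * PP n Lam x y' (tl bs) (tl bs')) / of_nat M"
    unfolding QQ_def by (simp add: PP_cons[OF ne] LL_def sum_divide_distrib mult.assoc)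
  also have "\<dots> = (\<Sum>x<M. \<rho> x a' a * Lam x (hd bs) (hd bs') * (\<Sum>y'\<in>bitstrings n. PP n Lam x y' (tl bs) (tl bs'))) / of_nat M"
    by (subst sum.swap) (simp add: sum_distrib_left)
  also have "\<dots> = (\<Sum>x<M. \<rho> x a' a * Lam x (hd bs) (hd bs')) / of_nat M * delta (tl bs) (tl bs')"
    unfolding sum_PP[OF lt] by (simp add: sum_distrib_right)
  finally show ?thesis .
qed

definition hh :: "nat \<Rightarrow> (nat \<Rightarrow> nat \<Rightarrow> nat \<Rightarrow> complex) \<Rightarrow> (nat \<Rightarrow> nat \<Rightarrow> nat \<Rightarrow> complex) \<Rightarrow> chan \<Rightarrow> nat \<Rightarrow> nat \<Rightarrow> nat \<Rightarrow> nat \<Rightarrow> complex" where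
  "hh M \<rho> Lam N a b a' b' = (\<Sum>x<M. \<rho> x a' a * Lam x b b') / of_nat M * N a' a b' b"

lemma c7b:
  shows "(\<Sum>y'\<in>bitstrings n. trace_on (idxAB dA dB (Suc n)) (mmult_on (idxAB dA dB (Suc n)) (QQ (Suc n) M \<rho> Lam (0 # y')) (choi_ext N)))
     = of_nat (dB ^ n) * (\<Sum>a<dA. \<Sum>b<dB. \<Sum>a'<dA. \<Sum>b'<dB. hh M \<rho> Lam N a b a' b')"
proof -
  let ?I = "idxAB dA dB (Suc n)"
  let ?Q = "\<lambda>y'. QQ (Suc n) M \<rho> Lam (0 # y')"
  have "(\<Sum>y'\<in>bitstrings n. trace_on ?I (mmult_on ?I (?Q y') (choi_ext N)))
      = (\<Sum>y'\<in>bitstrings n. \<Sum>p\<in>?I. \<Sum>q\<in>?I. ?Q y' p q * choi_ext N q p)"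
    unfolding trace_on_def mmult_on_def by simp
  also have "\<dots> = (\<Sum>p\<in>?I. \<Sum>y'\<in>bitstrings n. \<Sum>q\<in>?I. ?Q y' p q * choi_ext N q p)"
    by (rule sum.swap)
  also have "\<dots> = (\<Sum>p\<in>?I. \<Sum>q\<in>?I. \<Sum>y'\<in>bitstrings n. ?Q y' p q * choi_ext N q p)"
    by (rule sum.cong[OF refl], rule sum.swap)
  also have "\<dots> = (\<Sum>p\<in>?I. \<Sum>q\<in>?I. (\<Sum>y'\<in>bitstrings n. ?Q y' p q) * choi_ext N q p)"
    by (simp add: sum_distrib_right)
  also have "\<dots> = (\<Sum>a<dA. \<Sum>bs\<in>idxB dB (Suc n). \<Sum>a'<dA. \<Sum>bs'\<in>idxB dB (Suc n).
                     hh M \<rho> Lam N a (hd bs) a' (hd bs') * delta (tl bs) (tl bs'))"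
    unfolding idxAB_def sum_pair
  proof (intro sum.cong refl)
    fix a bs a' bs' assume bs: "bs \<in> idxB dB (Suc n)" and bs': "bs' \<in> idxB dB (Suc n)"
    show "(\<Sum>y'\<in>bitstrings n. ?Q y' (a, bs) (a', bs')) * choi_ext N (a', bs') (a, bs) =
          hh M \<rho> Lam N a (hd bs) a' (hd bs') * delta (tl bs) (tl bs')"
      unfolding c7a[OF bs bs'] choi_ext_def choi_def hh_def by (simp add: delta_def)
  qed
  also have "\<dots> = (\<Sum>a<dA. \<Sum>bs\<in>idxB dB (Suc n). \<Sum>a'<dA. \<Sum>b'<dB. hh M \<rho> Lam N a (hd bs) a' b')"
  proof (intro sum.cong refl)
    fix a bs a' assume bs: "bs \<in> idxB dB (Suc n)"
    hence "tl bs \<in> idxB dB n" by (simp add: idxB_Suc)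
    thus "(\<Sum>bs'\<in>idxB dB (Suc n). hh M \<rho> Lam N a (hd bs) a' (hd bs') * delta (tl bs) (tl bs')) =
          (\<Sum>b'<dB. hh M \<rho> Lam N a (hd bs) a' b')"
      by (rule sum_delta_tl)
  qed
  also have "\<dots> = (\<Sum>a<dA. \<Sum>b<dB. of_nat (dB ^ n) * (\<Sum>a'<dA. \<Sum>b'<dB. hh M \<rho> Lam N a b a' b'))"
    by (rule sum.cong[OF refl]) (rule sum_hd)
  also have "\<dots> = of_nat (dB ^ n) * (\<Sum>a<dA. \<Sum>b<dB. \<Sum>a'<dA. \<Sum>b'<dB. hh M \<rho> Lam N a b a' b')"
    by (simp add: sum_distrib_left)
  finally show ?thesis .
qed



lemma swap5:
  "(\<Sum>a\<in>A. \<Sum>b\<in>B. \<Sum>a'\<in>A. \<Sum>b'\<in>B. \<Sum>x\<in>X. F x a b a' b') = (\<Sum>x\<in>X. \<Sum>b\<in>B. \<Sum>b'\<in>B. \<Sum>a'\<in>A. \<Sum>a\<in>A. F x a b a' b')"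
proof -
  have "(\<Sum>a\<in>A. \<Sum>b\<in>B. \<Sum>a'\<in>A. \<Sum>b'\<in>B. \<Sum>x\<in>X. F x a b a' b') = (\<Sum>a\<in>A. \<Sum>b\<in>B. \<Sum>a'\<in>A. \<Sum>x\<in>X. \<Sum>b'\<in>B. F x a b a' b')"
    by (rule sum.cong[OF refl], rule sum.cong[OF refl], rule sum.cong[OF refl], rule sum.swap)
  also have "\<dots> = (\<Sum>a\<in>A. \<Sum>b\<in>B. \<Sum>x\<in>X. \<Sum>a'\<in>A. \<Sum>b'\<in>B. F x a b a' b')"
    by (rule sum.cong[OF refl], rule sum.cong[OF refl], rule sum.swap)
  also have "\<dots> = (\<Sum>a\<in>A. \<Sum>x\<in>X. \<Sum>b\<in>B. \<Sum>a'\<in>A. \<Sum>b'\<in>B. F x a b a' b')"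
    by (rule sum.cong[OF refl], rule sum.swap)
  also have "\<dots> = (\<Sum>x\<in>X. \<Sum>a\<in>A. \<Sum>b\<in>B. \<Sum>a'\<in>A. \<Sum>b'\<in>B. F x a b a' b')"
    by (rule sum.swap)
  also have "\<dots> = (\<Sum>x\<in>X. \<Sum>b\<in>B. \<Sum>a\<in>A. \<Sum>a'\<in>A. \<Sum>b'\<in>B. F x a b a' b')"
    by (rule sum.cong[OF refl], rule sum.swap)
  also have "\<dots> = (\<Sum>x\<in>X. \<Sum>b\<in>B. \<Sum>a\<in>A. \<Sum>b'\<in>B. \<Sum>a'\<in>A. F x a b a' b')"
    by (rule sum.cong[OF refl], rule sum.cong[OF refl], rule sum.cong[OF refl], rule sum.swap)
  also have "\<dots> = (\<Sum>x\<in>X. \<Sum>b\<in>B. \<Sum>b'\<in>B. \<Sum>a\<in>A. \<Sum>a'\<in>A. F x a b a' b')"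
    by (rule sum.cong[OF refl], rule sum.cong[OF refl], rule sum.swap)
  also have "\<dots> = (\<Sum>x\<in>X. \<Sum>b\<in>B. \<Sum>b'\<in>B. \<Sum>a'\<in>A. \<Sum>a\<in>A. F x a b a' b')"
    by (rule sum.cong[OF refl], rule sum.cong[OF refl], rule sum.cong[OF refl], rule sum.swap)
  finally show ?thesis .
qed

definition SS :: "nat \<Rightarrow> nat \<Rightarrow> chan \<Rightarrow> (nat \<Rightarrow> nat \<Rightarrow> nat \<Rightarrow> complex) \<Rightarrow> (nat \<Rightarrow> nat \<Rightarrow> nat \<Rightarrow> complex) \<Rightarrow> nat \<Rightarrow> nat \<Rightarrow> complex" where
  "SS dA dB N \<rho> Lam xh x = trace_on {..<dB} (mmult_on {..<dB} (Lam xh) (apply_chan dA N (\<rho> x)))"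

lemma c7c:
  "(\<Sum>a<dA. \<Sum>b<dB. \<Sum>a'<dA. \<Sum>b'<dB. hh M \<rho> Lam N a b a' b') = (\<Sum>x<M. SS dA dB N \<rho> Lam x x) / of_nat M"
proof -
  have "(\<Sum>a<dA. \<Sum>b<dB. \<Sum>a'<dA. \<Sum>b'<dB. hh M \<rho> Lam N a b a' b')
     = (\<Sum>a<dA. \<Sum>b<dB. \<Sum>a'<dA. \<Sum>b'<dB. \<Sum>x<M. \<rho> x a' a * Lam x b b' * N a' a b' b) / of_nat M"
    unfolding hh_def by (simp add: sum_divide_distrib sum_distrib_right)
  also have "\<dots> = (\<Sum>x<M. \<Sum>b<dB. \<Sum>b'<dB. \<Sum>a'<dA. \<Sum>a<dA. \<rho> x a' a * Lam x b b' * N a' a b' b) / of_nat M"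
    by (subst swap5) (rule refl)
  also have "\<dots> = (\<Sum>x<M. SS dA dB N \<rho> Lam x x) / of_nat M"
    unfolding SS_def trace_on_def mmult_on_def apply_chan_def by (simp add: sum_distrib_left mult_ac)
  finally show ?thesis .
qed

lemma qf_unit: "qf ({..<Suc 0} \<times> I) (\<lambda>(r, i) (r', j). X i j) v = qf I X (\<lambda>i. v (0, i))"
  unfolding qf_def by (simp add: sum_pair)

lemma chan_psd:
  assumes "completely_positive dA dB N" "psd_on {..<dA} R"
  shows "psd_on {..<dB} (apply_chan dA N R)"
proof -
  have "psd_on ({..<Suc 0} \<times> {..<dA}) (\<lambda>(r, i) (r', j). R i j)"
    using assms(2) unfolding psd_qf qf_unit by blast
  hence "psd_on ({..<Suc 0} \<times> {..<dB})
          (\<lambda>(r, b) (r', b'). \<Sum>i<dA. \<Sum>j<dA. (\<lambda>(r, i) (r', j). R i j) (r, i) (r', j) * N i j b b')"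
    using assms(1) unfolding completely_positive_def by blast
  hence "psd_on ({..<Suc 0} \<times> {..<dB}) (\<lambda>(r, b) (r', b'). apply_chan dA N R b b')"
    unfolding apply_chan_def by simp
  note P = this
  show ?thesis unfolding psd_qf
  proof
    fix u :: "nat \<Rightarrow> complex"
    have "0 \<le> qf ({..<Suc 0} \<times> {..<dB}) (\<lambda>(r, b) (r', b'). apply_chan dA N R b b') (\<lambda>p. u (snd p))"
      using P unfolding psd_qf by blast
    thus "0 \<le> qf {..<dB} (apply_chan dA N R) u" by (simp add: qf_unit)
  qed
qed

lemma trace_real:
  assumes "finite I" "\<And>i j. i \<in> I \<Longrightarrow> j \<in> I \<Longrightarrow> A j i = cnj (A i j)"
    "\<And>i j. i \<in> I \<Longrightarrow> j \<in> I \<Longrightarrow> B j i = cnj (B i j)"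
  shows "Im (trace_on I (mmult_on I A B)) = 0"
proof -
  let ?z = "trace_on I (mmult_on I A B)"
  have "cnj ?z = (\<Sum>i\<in>I. \<Sum>j\<in>I. A j i * B i j)"
    unfolding trace_on_def mmult_on_def cnj_sum
  proof (intro sum.cong refl)
    fix i j assume "i \<in> I" "j \<in> I"
    then have "cnj (A i j) = A j i" "cnj (B j i) = B i j" using assms(2)[of i j] assms(3)[of j i] by simp_all
    then show "cnj (A i j * B j i) = A j i * B i j" by simp
  qed
  also have "\<dots> = ?z" unfolding trace_on_def mmult_on_def by (subst sum.swap) simp
  finally have "Im (cnj ?z) = Im ?z" by simp
  thus ?thesis by simp
qed



lemma c7d:
  assumes qc: "quantum_channel dA dB N" and st: "\<forall>x<M. is_state_on {..<dA} (\<rho> x)"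
    and pv: "povm_on {..<dB} M Lam" and err: "max_err_prob dA dB N M \<rho> Lam \<le> \<epsilon>" and x: "x < M"
  shows "Im (SS dA dB N \<rho> Lam x x) = 0 \<and> 1 - \<epsilon> \<le> Re (SS dA dB N \<rho> Lam x x)"
proof
  define K where "K = apply_chan dA N (\<rho> x)"
  have psdK: "psd_on {..<dB} K" unfolding K_def
    using chan_psd qc st x unfolding quantum_channel_def is_state_on_def by blast
  have hK: "\<And>i j. i \<in> {..<dB} \<Longrightarrow> j \<in> {..<dB} \<Longrightarrow> K j i = cnj (K i j)"
    by (rule psd_herm[OF _ psdK]) auto
  have hL: "\<And>i j. i \<in> {..<dB} \<Longrightarrow> j \<in> {..<dB} \<Longrightarrow> Lam x j i = cnj (Lam x i j)"
    by (rule psd_herm[of "{..<dB}" "Lam x"]) (use pv x in \<open>auto simp: povm_on_def\<close>)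
  show "Im (SS dA dB N \<rho> Lam x x) = 0"
    unfolding SS_def K_def[symmetric] by (rule trace_real[OF _ hL hK]) simp
  have tot: "(\<Sum>xh<M. SS dA dB N \<rho> Lam xh x) = 1"
  proof -
    have "(\<Sum>xh<M. SS dA dB N \<rho> Lam xh x) = (\<Sum>xh<M. \<Sum>b<dB. \<Sum>b'<dB. Lam xh b b' * K b' b)"
      unfolding SS_def K_def trace_on_def mmult_on_def ..
    also have "\<dots> = (\<Sum>b<dB. \<Sum>xh<M. \<Sum>b'<dB. Lam xh b b' * K b' b)" by (rule sum.swap)
    also have "\<dots> = (\<Sum>b<dB. \<Sum>b'<dB. \<Sum>xh<M. Lam xh b b' * K b' b)" by (rule sum.cong[OF refl], rule sum.swap)
    also have "\<dots> = (\<Sum>b<dB. \<Sum>b'<dB. delta b b' * K b' b)"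
    proof (intro sum.cong refl)
      fix b b' assume "b \<in> {..<dB}" "b' \<in> {..<dB}"
      then have "(\<Sum>xh<M. Lam xh b b') = delta b b'" using pv unfolding povm_on_def by blast
      then show "(\<Sum>xh<M. Lam xh b b' * K b' b) = delta b b' * K b' b" by (simp add: sum_distrib_right[symmetric])
    qed
    also have "\<dots> = (\<Sum>b<dB. K b b)"
    proof (rule sum.cong[OF refl])
      fix b assume "b \<in> {..<dB}"
      have "(\<Sum>b'<dB. delta b b' * K b' b) = (\<Sum>b'<dB. if b = b' then K b' b else 0)"
        by (rule sum.cong[OF refl]) (simp add: delta_def)
      also have "\<dots> = K b b" using \<open>b \<in> {..<dB}\<close> by (simp add: sum.delta)
      finally show "(\<Sum>b'<dB. delta b b' * K b' b) = K b b" .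
    qed
    also have "\<dots> = (\<Sum>i<dA. \<Sum>j<dA. \<rho> x i j * trace_on {..<dB} (N i j))"
      unfolding K_def apply_chan_def trace_on_def
      by (subst sum.swap, rule sum.cong[OF refl], subst sum.swap) (simp add: sum_distrib_left)
    also have "\<dots> = (\<Sum>i<dA. \<Sum>j<dA. \<rho> x i j * delta i j)"
      using qc unfolding quantum_channel_def trace_preserving_def by (intro sum.cong refl) simp
    also have "\<dots> = (\<Sum>i<dA. \<rho> x i i)"
    proof (rule sum.cong[OF refl])
      fix i assume "i \<in> {..<dA}"
      have "(\<Sum>j<dA. \<rho> x i j * delta i j) = (\<Sum>j<dA. if i = j then \<rho> x i j else 0)"
        by (rule sum.cong[OF refl]) (simp add: delta_def)
      also have "\<dots> = \<rho> x i i" using \<open>i \<in> {..<dA}\<close> by (simp add: sum.delta)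
      finally show "(\<Sum>j<dA. \<rho> x i j * delta i j) = \<rho> x i i" .
    qed
    also have "\<dots> = 1" using st x unfolding is_state_on_def trace_on_def by simp
    finally show ?thesis .
  qed
  have e: "Re (\<Sum>xh\<in>{..<M} - {x}. SS dA dB N \<rho> Lam xh x) \<le> \<epsilon>"
  proof -
    have "Re (\<Sum>xh\<in>{..<M} - {x}. SS dA dB N \<rho> Lam xh x) \<le> max_err_prob dA dB N M \<rho> Lam"
      unfolding max_err_prob_def SS_def using x by (intro Max_ge) auto
    thus ?thesis using err by simp
  qed
  have "(\<Sum>xh<M. SS dA dB N \<rho> Lam xh x) = SS dA dB N \<rho> Lam x x + (\<Sum>xh\<in>{..<M} - {x}. SS dA dB N \<rho> Lam xh x)"
    using x by (subst sum.remove[of _ x]) auto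
  then have "Re (SS dA dB N \<rho> Lam x x) = 1 - Re (\<Sum>xh\<in>{..<M} - {x}. SS dA dB N \<rho> Lam xh x)"
  proof -
    assume "(\<Sum>xh<M. SS dA dB N \<rho> Lam xh x) = SS dA dB N \<rho> Lam x x + (\<Sum>xh\<in>{..<M} - {x}. SS dA dB N \<rho> Lam xh x)"
    with tot have "Re (SS dA dB N \<rho> Lam x x + (\<Sum>xh\<in>{..<M} - {x}. SS dA dB N \<rho> Lam xh x)) = 1" by simp
    thus ?thesis by simp
  qed
  then show "1 - \<epsilon> \<le> Re (SS dA dB N \<rho> Lam x x)" using e by simp
qed



lemma feasible_code:
  assumes dA: "0 < dA" and dB: "0 < dB" and qc: "quantum_channel dA dB N" and k: "1 \<le> k"
    and ach: "achievable dA dB N \<epsilon> M"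
  shows "\<exists>\<rho>A Q. feasible dA dB N \<epsilon> k (1 / real M) \<rho>A Q"
proof -
  obtain \<rho> Lam where st: "\<forall>x<M. is_state_on {..<dA} (\<rho> x)" and pv: "povm_on {..<dB} M Lam"
    and err: "max_err_prob dA dB N M \<rho> Lam \<le> \<epsilon>" and M: "1 \<le> M"
    using ach unfolding achievable_def by blast
  obtain n where kn: "k = Suc n" using k by (cases k) auto
  have tr: "\<forall>x<M. trace_on {..<dA} (\<rho> x) = 1" using st by (auto simp: is_state_on_def)
  have seven: "complex_of_real (1 - \<epsilon>) \<le> (1 / of_nat dB ^ (k - 1)) * (\<Sum>y'\<in>bitstrings (k - 1).
          trace_on (idxAB dA dB k) (mmult_on (idxAB dA dB k) (QQ k M \<rho> Lam (0 # y')) (choi_ext N)))"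
  proof -
    have "(1 / of_nat dB ^ (k - 1)) * (\<Sum>y'\<in>bitstrings (k - 1).
          trace_on (idxAB dA dB k) (mmult_on (idxAB dA dB k) (QQ k M \<rho> Lam (0 # y')) (choi_ext N)))
        = (1 / of_nat dB ^ n) * (of_nat (dB ^ n) * ((\<Sum>x<M. SS dA dB N \<rho> Lam x x) / of_nat M))"
      unfolding kn using c7b[where n=n and dA=dA and dB=dB and M=M and \<rho>=\<rho> and Lam=Lam and N=N]
        c7c[where dA=dA and dB=dB and M=M and \<rho>=\<rho> and Lam=Lam and N=N] by simp
    also have "\<dots> = (\<Sum>x<M. SS dA dB N \<rho> Lam x x) / of_nat M"
      using dB by simp
    finally have eq: "(1 / of_nat dB ^ (k - 1)) * (\<Sum>y'\<in>bitstrings (k - 1).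
          trace_on (idxAB dA dB k) (mmult_on (idxAB dA dB k) (QQ k M \<rho> Lam (0 # y')) (choi_ext N)))
        = (\<Sum>x<M. SS dA dB N \<rho> Lam x x) / of_nat M" .
    have each: "\<And>x. x < M \<Longrightarrow> Im (SS dA dB N \<rho> Lam x x) = 0 \<and> 1 - \<epsilon> \<le> Re (SS dA dB N \<rho> Lam x x)"
      using c7d[OF qc st pv err] by blast
    have im: "Im (\<Sum>x<M. SS dA dB N \<rho> Lam x x) = 0" using each by (simp add: Im_sum)
    have "(\<Sum>x<M. 1 - \<epsilon>) \<le> (\<Sum>x<M. Re (SS dA dB N \<rho> Lam x x))"
      using each by (intro sum_mono) auto
    hence re: "real M * (1 - \<epsilon>) \<le> Re (\<Sum>x<M. SS dA dB N \<rho> Lam x x)" by (simp add: Re_sum)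
    have Mpos: "0 < real M" using M by simp
    have "(1 - \<epsilon>) \<le> Re (\<Sum>x<M. SS dA dB N \<rho> Lam x x) / real M"
      using re Mpos by (simp add: field_simps)
    moreover have "Re ((\<Sum>x<M. SS dA dB N \<rho> Lam x x) / of_nat M) = Re (\<Sum>x<M. SS dA dB N \<rho> Lam x x) / real M"
      by (metis Re_divide_of_nat)
    moreover have "Im ((\<Sum>x<M. SS dA dB N \<rho> Lam x x) / of_nat M) = 0"
      using im by (simp add: Im_divide_of_nat)
    ultimately show ?thesis unfolding eq by (simp add: less_eq_complex_def)
  qed
  show ?thesis
  proof (intro exI)
    show "feasible dA dB N \<epsilon> k (1 / real M) (rhoA M \<rho>) (QQ k M \<rho> Lam)"
      unfolding feasible_def
    proof (intro conjI)
      show "0 \<le> 1 / real M" by simp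
      show "is_state_on {..<dA} (rhoA M \<rho>)" by (rule c_state[OF st M])
      show "\<forall>(a, bs)\<in>idxAB dA dB k. \<forall>(a', bs')\<in>idxAB dA dB k.
        (\<Sum>y\<in>bitstrings k. QQ k M \<rho> Lam y (a, bs) (a', bs')) = rhoA M \<rho> a a' * delta bs bs'"
        unfolding idxAB_def using c1 by blast
      show "\<forall>y\<in>bitstrings k. psd_on (idxAB dA dB k) (QQ k M \<rho> Lam y)"
        using c2[OF st pv] by blast
      show "\<forall>\<pi>. \<pi> permutes {..<k} \<longrightarrow> (\<forall>y\<in>bitstrings k.
        (\<forall>p\<in>idxAB dA dB k. \<forall>p'\<in>idxAB dA dB k.
           conj_perm \<pi> (QQ k M \<rho> Lam (permute_list_by \<pi> y)) p p' = QQ k M \<rho> Lam y p p'))"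
        using c3 by blast
      show "\<forall>i\<in>{1..k}. \<forall>y\<in>bitstrings k. psd_on (idxAB dA dB k) (ptrans i (QQ k M \<rho> Lam y))"
        using c4[OF st pv] by auto
      show "psd_on (idxB dB k) (\<lambda>bs bs'. complex_of_real (1 / real M) * delta bs bs' -
        (\<Sum>y'\<in>bitstrings (k - 1). ptrace_A dA (QQ k M \<rho> Lam (0 # y')) bs bs'))"
        by (rule c5[OF st pv k])
      show "\<forall>y'\<in>bitstrings (k - 1). \<forall>bs\<in>idxB dB k. \<forall>bs'\<in>idxB dB k.
        (\<Sum>yk\<in>{0, 1}. ptrace_A dA (QQ k M \<rho> Lam (y' @ [yk])) bs bs') =
        (1 / of_nat dB) * (\<Sum>yk\<in>{0, 1}. ptrace_ABk_tensor_I dA dB (QQ k M \<rho> Lam (y' @ [yk])) bs bs')"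
        using c6[OF st k dB] by blast
      show "complex_of_real (1 - \<epsilon>) \<le> (1 / of_nat dB ^ (k - 1)) * (\<Sum>y'\<in>bitstrings (k - 1).
          trace_on (idxAB dA dB k) (mmult_on (idxAB dA dB k) (QQ k M \<rho> Lam (0 # y')) (choi_ext N)))"
        by (rule seven)
    qed
  qed
qed

theorem theorem1:
  fixes dA dB :: nat and N :: chan and \<epsilon> :: real and k :: nat
  assumes "0 < dA" and "0 < dB"
    and "quantum_channel dA dB N"
    and "0 \<le> \<epsilon>" and "\<epsilon> \<le> 1"
    and "1 \<le> k"
  shows "one_shot_capacity dA dB N \<epsilon> \<le> sdp_bound dA dB N \<epsilon> k"
  unfolding one_shot_capacity_def sdp_bound_def
proof (rule SUP_least)
  fix M assume "M \<in> {M. achievable dA dB N \<epsilon> M}"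
  hence ach: "achievable dA dB N \<epsilon> M" by simp
  hence M: "1 \<le> M" unfolding achievable_def by simp
  let ?S = "{lam. \<exists>\<rho> Q. feasible dA dB N \<epsilon> k lam \<rho> Q}"
  let ?L = "INF lam\<in>?S. ereal lam"
  have mem: "1 / real M \<in> ?S" using feasible_code[OF assms(1,2,3,6) ach] by simp
  have up: "?L \<le> ereal (1 / real M)" using mem by (rule INF_lower)
  have lo: "0 \<le> ?L" by (rule INF_greatest) (auto simp: feasible_def)
  show "ereal (log 2 (real M)) \<le> neg_log2 ?L"
  proof (cases "?L = 0")
    case True
    then show ?thesis unfolding neg_log2_def by simp
  next
    case False
    obtain r where r: "?L = ereal r" using up lo by (cases ?L) auto
    have r0: "0 < r" using r lo False by auto
    have r1: "r \<le> 1 / real M" using r up by simp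
    have "0 < 1 / real M" using M by simp
    hence "log 2 r \<le> log 2 (1 / real M)" using r0 r1 by (simp add: log_le_cancel_iff)
    also have "log 2 (1 / real M) = - log 2 (real M)" using M by (simp add: log_divide)
    finally have "log 2 (real M) \<le> - log 2 r" by simp
    then show ?thesis unfolding neg_log2_def using False r by simp
  qed
qed



end
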